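(* Assume $\mathcal M$ satisfies extensibility. Let $\lambda^*\in\mathbb R^A$ with $\lambda^*>0$ and $p^*\in\mathbb R^G_{\ge0}$ be such that $(\lambda^*,p^* )$ is proper. Then there exists an optimal solution $X^*$ of $LP(\lambda^* )$ such that $\mathrm{pay}_i(X^*,p^* )=m_i$ for every $i\in A$.
   Context: A market $\mathcal M$: finite agent set $A$, finite goods set $G$ (supply $1$ each), finite index set $C$; agent $i$ has real coefficients $a_{ijk}$, requirements $r_{ik}\ge0$, delays $d_{ij}\ge0$, budget $m_i>0$; $m(S)=\sum_{i\in S}m_i$. CC$(i)$: $\sum_ja_{ijk}x_{ij}\ge r_{ik}$ for all $k$, $x_{ij}\ge0$. An allocation $X\ge0$ is supply respecting if $\sum_ix_{ij}\le1$ for all $j$. For $S\subseteq A$, $X$ is jointly optimal for $S$ if it satisfies CC$(i)$ for all $i\in S$, is supply respecting, and minimizes $\sum_{i\in S}\sum_jd_{ij}x_{ij}$ among such allocations. Extensibility: for every $S\subset A$, every $X$ jointly optimal for $S$ and every $i\in A\setminus S$, there is $X'$ jointly optimal for $S\cup\{i\}$ with $\sum_jd_{i'j}x'_{i'j}=\sum_jd_{i'j}x_{i'j}$ for all $i'\in S$. $LP(\lambda)$: minimize $\sum_i\lambda_i\sum_jd_{ij}x_{ij}$ s.t. $\sum_ja_{ijk}x_{ij}\ge r_{ik}$ for all $(i,k)$, $\sum_ix_{ij}\le1$ for all $j$, $x\ge0$. $DLP(\lambda)$: maximize $\sum_{i,k}r_{ik}\alpha_{ik}-\sum_jp_j$ s.t.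 $\lambda_id_{ij}\ge\sum_ka_{ijk}\alpha_{ik}-p_j$ for all $(i,j)$, $\alpha,p\ge0$. $\mathrm{delay}_S(X)=\sum_{i\in S}\sum_jd_{ij}x_{ij}$, $\mathrm{pay}_S(X,p)=\sum_{i\in S}\sum_jp_jx_{ij}$, $\mathrm{pay}_i=\mathrm{pay}_{\{i\}}$. Given $(\lambda,p)$ and $S\subseteq A$: condition BB holds for $S$ if $\mathrm{pay}_S(X,p)=m(S)$ for every optimal solution $X$ of $LP(\lambda)$; condition SC holds for $S$ if for every $T\subseteq S$, letting $X$ be an optimal solution of $LP(\lambda)$ that maximizes $\mathrm{delay}_T$ among optimal solutions, $m(T)\ge\mathrm{pay}_T(X,p)$. The pair $(\lambda,p)$ is proper if there is $\alpha$ with $(\alpha,p)$ optimal for $DLP(\lambda)$, and BB and SC hold for every class $S_g$ of the partition of $A$ by equality of $\lambda_i$. *)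

theory Defs
  imports Complex_Main
begin

text \<open>Allocations are functions X :: agent => good => real (only values on A x G matter).\<close>

definition nonneg_alloc :: "'a set \<Rightarrow> 'g set \<Rightarrow> ('a \<Rightarrow> 'g \<Rightarrow> real) \<Rightarrow> bool" where
  "nonneg_alloc A G X \<longleftrightarrow> (\<forall>i\<in>A. \<forall>j\<in>G. X i j \<ge> 0)"

definition CC :: "'g set \<Rightarrow> 'c set \<Rightarrow> ('a \<Rightarrow> 'g \<Rightarrow> 'c \<Rightarrow> real) \<Rightarrow> ('a \<Rightarrow> 'c \<Rightarrow> real)
    \<Rightarrow> ('a \<Rightarrow> 'g \<Rightarrow> real) \<Rightarrow> 'a \<Rightarrow> bool" where
  "CC G C a r X i \<longleftrightarrow> (\<forall>k\<in>C. (\<Sum>j\<in>G. a i j k * X i j) \<ge> r i k) \<and> (\<forall>j\<in>G. X i j \<ge> 0)"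

definition supply_respecting :: "'a set \<Rightarrow> 'g set \<Rightarrow> ('a \<Rightarrow> 'g \<Rightarrow> real) \<Rightarrow> bool" where
  "supply_respecting A G X \<longleftrightarrow> (\<forall>j\<in>G. (\<Sum>i\<in>A. X i j) \<le> 1)"

definition delay :: "'g set \<Rightarrow> ('a \<Rightarrow> 'g \<Rightarrow> real) \<Rightarrow> 'a set \<Rightarrow> ('a \<Rightarrow> 'g \<Rightarrow> real) \<Rightarrow> real" where
  "delay G d S X = (\<Sum>i\<in>S. \<Sum>j\<in>G. d i j * X i j)"

definition pay :: "'g set \<Rightarrow> 'a set \<Rightarrow> ('a \<Rightarrow> 'g \<Rightarrow> real) \<Rightarrow> ('g \<Rightarrow> real) \<Rightarrow> real" where
  "pay G S X p = (\<Sum>i\<in>S. \<Sum>j\<in>G. p j * X i j)"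

definition admissible_for :: "'a set \<Rightarrow> 'g set \<Rightarrow> 'c set \<Rightarrow> ('a \<Rightarrow> 'g \<Rightarrow> 'c \<Rightarrow> real)
    \<Rightarrow> ('a \<Rightarrow> 'c \<Rightarrow> real) \<Rightarrow> 'a set \<Rightarrow> ('a \<Rightarrow> 'g \<Rightarrow> real) \<Rightarrow> bool" where
  "admissible_for A G C a r S X \<longleftrightarrow>
     nonneg_alloc A G X \<and> (\<forall>i\<in>S. CC G C a r X i) \<and> supply_respecting A G X"

definition jointly_optimal :: "'a set \<Rightarrow> 'g set \<Rightarrow> 'c set \<Rightarrow> ('a \<Rightarrow> 'g \<Rightarrow> 'c \<Rightarrow> real)
    \<Rightarrow> ('a \<Rightarrow> 'c \<Rightarrow> real) \<Rightarrow> ('a \<Rightarrow> 'g \<Rightarrow> real) \<Rightarrow> 'a set \<Rightarrow> ('a \<Rightarrow> 'g \<Rightarrow> real) \<Rightarrow> bool" where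
  "jointly_optimal A G C a r d S X \<longleftrightarrow>
     admissible_for A G C a r S X \<and>
     (\<forall>Y. admissible_for A G C a r S Y \<longrightarrow> delay G d S X \<le> delay G d S Y)"

definition extensible :: "'a set \<Rightarrow> 'g set \<Rightarrow> 'c set \<Rightarrow> ('a \<Rightarrow> 'g \<Rightarrow> 'c \<Rightarrow> real)
    \<Rightarrow> ('a \<Rightarrow> 'c \<Rightarrow> real) \<Rightarrow> ('a \<Rightarrow> 'g \<Rightarrow> real) \<Rightarrow> bool" where
  "extensible A G C a r d \<longleftrightarrow>
     (\<forall>S X i. S \<subset> A \<longrightarrow> jointly_optimal A G C a r d S X \<longrightarrow> i \<in> A - S \<longrightarrow>
        (\<exists>X'. jointly_optimal A G C a r d (insert i S) X' \<and>
              (\<forall>i'\<in>S. delay G d {i'} X' = delay G d {i'} X)))"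

definition LP_obj :: "'a set \<Rightarrow> 'g set \<Rightarrow> ('a \<Rightarrow> 'g \<Rightarrow> real) \<Rightarrow> ('a \<Rightarrow> real)
    \<Rightarrow> ('a \<Rightarrow> 'g \<Rightarrow> real) \<Rightarrow> real" where
  "LP_obj A G d lam X = (\<Sum>i\<in>A. lam i * (\<Sum>j\<in>G. d i j * X i j))"

definition LP_optimal :: "'a set \<Rightarrow> 'g set \<Rightarrow> 'c set \<Rightarrow> ('a \<Rightarrow> 'g \<Rightarrow> 'c \<Rightarrow> real)
    \<Rightarrow> ('a \<Rightarrow> 'c \<Rightarrow> real) \<Rightarrow> ('a \<Rightarrow> 'g \<Rightarrow> real) \<Rightarrow> ('a \<Rightarrow> real) \<Rightarrow> ('a \<Rightarrow> 'g \<Rightarrow> real) \<Rightarrow> bool" where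
  "LP_optimal A G C a r d lam X \<longleftrightarrow>
     admissible_for A G C a r A X \<and>
     (\<forall>Y. admissible_for A G C a r A Y \<longrightarrow> LP_obj A G d lam X \<le> LP_obj A G d lam Y)"

definition DLP_feasible :: "'a set \<Rightarrow> 'g set \<Rightarrow> 'c set \<Rightarrow> ('a \<Rightarrow> 'g \<Rightarrow> 'c \<Rightarrow> real)
    \<Rightarrow> ('a \<Rightarrow> 'g \<Rightarrow> real) \<Rightarrow> ('a \<Rightarrow> real) \<Rightarrow> ('a \<Rightarrow> 'c \<Rightarrow> real) \<Rightarrow> ('g \<Rightarrow> real) \<Rightarrow> bool" where
  "DLP_feasible A G C a d lam \<alpha> p \<longleftrightarrow>
     (\<forall>i\<in>A. \<forall>j\<in>G. lam i * d i j \<ge> (\<Sum>k\<in>C. a i j k * \<alpha> i k) - p j) \<and>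
     (\<forall>i\<in>A. \<forall>k\<in>C. \<alpha> i k \<ge> 0) \<and> (\<forall>j\<in>G. p j \<ge> 0)"

definition DLP_obj :: "'a set \<Rightarrow> 'g set \<Rightarrow> 'c set \<Rightarrow> ('a \<Rightarrow> 'c \<Rightarrow> real)
    \<Rightarrow> ('a \<Rightarrow> 'c \<Rightarrow> real) \<Rightarrow> ('g \<Rightarrow> real) \<Rightarrow> real" where
  "DLP_obj A G C r \<alpha> p = (\<Sum>i\<in>A. \<Sum>k\<in>C. r i k * \<alpha> i k) - (\<Sum>j\<in>G. p j)"

definition DLP_optimal :: "'a set \<Rightarrow> 'g set \<Rightarrow> 'c set \<Rightarrow> ('a \<Rightarrow> 'g \<Rightarrow> 'c \<Rightarrow> real)
    \<Rightarrow> ('a \<Rightarrow> 'c \<Rightarrow> real) \<Rightarrow> ('a \<Rightarrow> 'g \<Rightarrow> real) \<Rightarrow> ('a \<Rightarrow> real)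
    \<Rightarrow> ('a \<Rightarrow> 'c \<Rightarrow> real) \<Rightarrow> ('g \<Rightarrow> real) \<Rightarrow> bool" where
  "DLP_optimal A G C a r d lam \<alpha> p \<longleftrightarrow>
     DLP_feasible A G C a d lam \<alpha> p \<and>
     (\<forall>\<beta> q. DLP_feasible A G C a d lam \<beta> q \<longrightarrow> DLP_obj A G C r \<beta> q \<le> DLP_obj A G C r \<alpha> p)"

definition budget :: "('a \<Rightarrow> real) \<Rightarrow> 'a set \<Rightarrow> real" where
  "budget m S = (\<Sum>i\<in>S. m i)"

definition cond_BB :: "'a set \<Rightarrow> 'g set \<Rightarrow> 'c set \<Rightarrow> ('a \<Rightarrow> 'g \<Rightarrow> 'c \<Rightarrow> real)
    \<Rightarrow> ('a \<Rightarrow> 'c \<Rightarrow> real) \<Rightarrow> ('a \<Rightarrow> 'g \<Rightarrow> real) \<Rightarrow> ('a \<Rightarrow> real)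
    \<Rightarrow> ('a \<Rightarrow> real) \<Rightarrow> ('g \<Rightarrow> real) \<Rightarrow> 'a set \<Rightarrow> bool" where
  "cond_BB A G C a r d m lam p S \<longleftrightarrow>
     (\<forall>X. LP_optimal A G C a r d lam X \<longrightarrow> pay G S X p = budget m S)"

definition cond_SC :: "'a set \<Rightarrow> 'g set \<Rightarrow> 'c set \<Rightarrow> ('a \<Rightarrow> 'g \<Rightarrow> 'c \<Rightarrow> real)
    \<Rightarrow> ('a \<Rightarrow> 'c \<Rightarrow> real) \<Rightarrow> ('a \<Rightarrow> 'g \<Rightarrow> real) \<Rightarrow> ('a \<Rightarrow> real)
    \<Rightarrow> ('a \<Rightarrow> real) \<Rightarrow> ('g \<Rightarrow> real) \<Rightarrow> 'a set \<Rightarrow> bool" where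
  "cond_SC A G C a r d m lam p S \<longleftrightarrow>
     (\<forall>T X. T \<subseteq> S \<longrightarrow> LP_optimal A G C a r d lam X \<longrightarrow>
        (\<forall>Y. LP_optimal A G C a r d lam Y \<longrightarrow> delay G d T Y \<le> delay G d T X) \<longrightarrow>
        budget m T \<ge> pay G T X p)"

definition lam_class :: "'a set \<Rightarrow> ('a \<Rightarrow> real) \<Rightarrow> 'a \<Rightarrow> 'a set" where
  "lam_class A lam i0 = {i\<in>A. lam i = lam i0}"

definition proper :: "'a set \<Rightarrow> 'g set \<Rightarrow> 'c set \<Rightarrow> ('a \<Rightarrow> 'g \<Rightarrow> 'c \<Rightarrow> real)
    \<Rightarrow> ('a \<Rightarrow> 'c \<Rightarrow> real) \<Rightarrow> ('a \<Rightarrow> 'g \<Rightarrow> real) \<Rightarrow> ('a \<Rightarrow> real)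
    \<Rightarrow> ('a \<Rightarrow> real) \<Rightarrow> ('g \<Rightarrow> real) \<Rightarrow> bool" where
  "proper A G C a r d m lam p \<longleftrightarrow>
     (\<exists>\<alpha>. DLP_optimal A G C a r d lam \<alpha> p) \<and>
     (\<forall>i0\<in>A. cond_BB A G C a r d m lam p (lam_class A lam i0) \<and>
              cond_SC A G C a r d m lam p (lam_class A lam i0))"

end

theory Submission imports Defs "HOL-Library.Product_Lexorder" begin


datatype 'r ix = L 'r | W0 "'r ix" | W2 "'r ix" "'r ix"

lemma fm_step_solution:
  fixes s b c :: "'i \<Rightarrow> real"
  assumes fin: "finite Ip" "finite In"
    and p: "\<forall>i\<in>Ip. c i > 0" and n: "\<forall>j\<in>In. c j < 0"
    and pair: "\<forall>i\<in>Ip. \<forall>j\<in>In. (- c j) * s i + c i * s j \<le> (- c j) * b i + c i * b j"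
  shows "\<exists>t. (\<forall>i\<in>Ip. c i * t + s i \<le> b i) \<and> (\<forall>j\<in>In. c j * t + s j \<le> b j)"
proof -
  define u where "u i = (b i - s i) / c i" for i
  have key: "u j \<le> u i" if "i \<in> Ip" "j \<in> In" for i j
  proof -
    have ci: "c i > 0" and cj: "c j < 0" using p n that by auto
    have "(- c j) * s i + c i * s j \<le> (- c j) * b i + c i * b j" using pair that by auto
    hence "c i * (b j - s j) \<ge> c j * (b i - s i)" by (simp add: algebra_simps)
    hence "(b j - s j) / c j \<le> (b i - s i) / c i"
      using ci cj by (simp add: field_simps)
    thus ?thesis by (simp add: u_def)
  qed
  define t where "t = (if Ip = {} then (if In = {} then 0 else Max (u ` In)) else Min (u ` Ip))"
  have tu: "t \<le> u i" if "i \<in> Ip" for i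
    using that fin by (auto simp: t_def)
  have tl: "u j \<le> t" if "j \<in> In" for j
  proof (cases "Ip = {}")
    case True thus ?thesis using that fin by (auto simp: t_def)
  next
    case False
    then obtain i where "i \<in> Ip" "t = u i" using fin
      by (metis (no_types, lifting) Min_in finite_imageI image_iff image_is_empty t_def)
    thus ?thesis using key that by auto
  qed
  have "\<forall>i\<in>Ip. c i * t + s i \<le> b i"
  proof
    fix i assume i: "i \<in> Ip"
    have "c i * t \<le> c i * u i" using tu[OF i] p i by (simp add: mult_left_mono)
    also have "\<dots> = b i - s i" using p i by (auto simp: u_def)
    finally show "c i * t + s i \<le> b i" by simp
  qed
  moreover have "\<forall>j\<in>In. c j * t + s j \<le> b j"
  proof
    fix j assume j: "j \<in> In"
    have "c j * t \<le> c j * u j" using tl[OF j] n j by (simp add: mult_left_mono_neg)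
    also have "\<dots> = b j - s j" using n j by (auto simp: u_def)
    finally show "c j * t + s j \<le> b j" by simp
  qed
  ultimately show ?thesis by blast
qed

lemma sum_if_sub: "finite I \<Longrightarrow> J \<subseteq> I \<Longrightarrow> (\<Sum>i\<in>I. if i \<in> J then g i else 0) = sum g J"
  by (simp add: sum.inter_restrict[symmetric] Int_absorb1)

definition Fp :: "('r ix \<Rightarrow> 'v \<Rightarrow> real) \<Rightarrow> 'v \<Rightarrow> ('r ix \<Rightarrow> real) \<Rightarrow> 'r ix \<Rightarrow> real" where
  "Fp M v0 F k = (case k of W0 i \<Rightarrow> F i | W2 i j \<Rightarrow> (- M j v0) * F i + M i v0 * F j | L r \<Rightarrow> 0)"

lemma Fp_simps[simp]: "Fp M v0 F (W0 i) = F i" "Fp M v0 F (W2 i j) = (- M j v0) * F i + M i v0 * F j"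
  by (simp_all add: Fp_def)

lemma fm_transfer:
  fixes M :: "'r ix \<Rightarrow> 'v \<Rightarrow> real" and y' :: "'r ix \<Rightarrow> real"
    and I :: "'r ix set" and v0 :: 'v and F :: "'r ix \<Rightarrow> real"
  defines "I0 \<equiv> {i\<in>I. M i v0 = 0}" and "Ip \<equiv> {i\<in>I. M i v0 > 0}" and "In \<equiv> {i\<in>I. M i v0 < 0}"
  defines "I' \<equiv> W0 ` I0 \<union> (\<lambda>(i,j). W2 i j) ` (Ip \<times> In)"
  defines "y \<equiv> (\<lambda>i. (if i \<in> I0 then y' (W0 i) else 0)
        + (if i \<in> Ip then (\<Sum>j\<in>In. y' (W2 i j) * (- M j v0)) else 0)
        + (if i \<in> In then (\<Sum>i'\<in>Ip. y' (W2 i' i) * M i' v0) else 0))"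
  assumes fin: "finite I"
  shows "(\<Sum>i\<in>I. y i * F i) = (\<Sum>k\<in>I'. y' k * Fp M v0 F k)"
proof -
  have f0: "finite I0" "finite Ip" "finite In" using fin by (auto simp: I0_def Ip_def In_def)
  have "(\<Sum>k\<in>I'. y' k * Fp M v0 F k) = (\<Sum>k\<in>W0 ` I0. y' k * Fp M v0 F k)
      + (\<Sum>k\<in>(\<lambda>(i,j). W2 i j) ` (Ip \<times> In). y' k * Fp M v0 F k)"
    unfolding I'_def by (rule sum.union_disjoint) (use f0 in auto)
  also have "(\<Sum>k\<in>W0 ` I0. y' k * Fp M v0 F k) = (\<Sum>i\<in>I0. y' (W0 i) * F i)"
    by (subst sum.reindex) (auto simp: inj_on_def)
  also have "(\<Sum>k\<in>(\<lambda>(i,j). W2 i j) ` (Ip \<times> In). y' k * Fp M v0 F k)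
      = (\<Sum>(i,j)\<in>Ip \<times> In. y' (W2 i j) * ((- M j v0) * F i + M i v0 * F j))"
    by (subst sum.reindex) (auto simp: inj_on_def intro!: sum.cong)
  also have "\<dots> = (\<Sum>(i,j)\<in>Ip \<times> In. y' (W2 i j) * (- M j v0) * F i)
       + (\<Sum>(i,j)\<in>Ip \<times> In. y' (W2 i j) * M i v0 * F j)"
    by (subst sum.distrib[symmetric]) (auto intro!: sum.cong simp: algebra_simps)
  also have "(\<Sum>(i,j)\<in>Ip \<times> In. y' (W2 i j) * (- M j v0) * F i)
      = (\<Sum>i\<in>Ip. (\<Sum>j\<in>In. y' (W2 i j) * (- M j v0)) * F i)"
    by (simp add: sum.cartesian_product[symmetric] sum_distrib_right)
  also have "(\<Sum>(i,j)\<in>Ip \<times> In. y' (W2 i j) * M i v0 * F j)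
      = (\<Sum>j\<in>In. (\<Sum>i\<in>Ip. y' (W2 i j) * M i v0) * F j)"
    by (simp add: sum.cartesian_product[symmetric] sum_distrib_right, subst sum.swap, simp)
  finally have R: "(\<Sum>k\<in>I'. y' k * Fp M v0 F k) = (\<Sum>i\<in>I0. y' (W0 i) * F i)
      + (\<Sum>i\<in>Ip. (\<Sum>j\<in>In. y' (W2 i j) * (- M j v0)) * F i)
      + (\<Sum>j\<in>In. (\<Sum>i\<in>Ip. y' (W2 i j) * M i v0) * F j)" by (simp add: add.assoc)
  have "(\<Sum>i\<in>I. y i * F i) = (\<Sum>i\<in>I. (if i \<in> I0 then y' (W0 i) * F i else 0))
      + (\<Sum>i\<in>I. (if i \<in> Ip then (\<Sum>j\<in>In. y' (W2 i j) * (- M j v0)) * F i else 0))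
      + (\<Sum>i\<in>I. (if i \<in> In then (\<Sum>i'\<in>Ip. y' (W2 i' i) * M i' v0) * F i else 0))"
    unfolding sum.distrib[symmetric] by (rule sum.cong) (auto simp: y_def distrib_right)
  also have "\<dots> = (\<Sum>i\<in>I0. y' (W0 i) * F i)
      + (\<Sum>i\<in>Ip. (\<Sum>j\<in>In. y' (W2 i j) * (- M j v0)) * F i)
      + (\<Sum>j\<in>In. (\<Sum>i\<in>Ip. y' (W2 i j) * M i v0) * F j)"
  proof -
    have "I0 \<subseteq> I" "Ip \<subseteq> I" "In \<subseteq> I" by (auto simp: I0_def Ip_def In_def)
    thus ?thesis by (simp only: sum_if_sub[OF fin])
  qed
  finally show ?thesis using R by simp
qed

lemma farkas_ix:
  fixes V :: "'v set"
  assumes "finite V"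
  shows "\<forall>(I :: 'r ix set) (M :: 'r ix \<Rightarrow> 'v \<Rightarrow> real) b. finite I \<longrightarrow> (\<forall>x. \<exists>i\<in>I. b i < (\<Sum>v\<in>V. M i v * x v)) \<longrightarrow>
     (\<exists>y. (\<forall>i\<in>I. 0 \<le> y i) \<and> (\<forall>v\<in>V. (\<Sum>i\<in>I. y i * M i v) = 0) \<and> (\<Sum>i\<in>I. y i * b i) < 0)"
  using assms
proof (induction V rule: finite_induct)
  case empty
  show ?case
  proof (intro allI impI)
    fix I :: "'r ix set" and M :: "'r ix \<Rightarrow> 'v \<Rightarrow> real" and b :: "'r ix \<Rightarrow> real"
    assume fin: "finite I" and inf: "\<forall>x. \<exists>i\<in>I. b i < (\<Sum>v\<in>{}. M i v * x v)"
    then obtain i0 where i0: "i0 \<in> I" "b i0 < 0" by auto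
    define y where "y i = (if i = i0 then 1 else (0::real))" for i
    have "(\<Sum>i\<in>I. y i * b i) = b i0" using fin i0 by (simp add: y_def if_distrib[of "\<lambda>z. z * _"] sum.delta cong: if_cong)
    thus "\<exists>y. (\<forall>i\<in>I. 0 \<le> y i) \<and> (\<forall>v\<in>{}. (\<Sum>i\<in>I. y i * M i v) = 0) \<and> (\<Sum>i\<in>I. y i * b i) < 0"
      using i0 by (intro exI[of _ y]) (auto simp: y_def)
  qed
next
  case (insert v0 V')
  show ?case
  proof (intro allI impI)
    fix I :: "'r ix set" and M :: "'r ix \<Rightarrow> 'v \<Rightarrow> real" and b :: "'r ix \<Rightarrow> real"
    assume fin: "finite I" and inf: "\<forall>x. \<exists>i\<in>I. b i < (\<Sum>v\<in>insert v0 V'. M i v * x v)"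
    define I0 where "I0 = {i\<in>I. M i v0 = 0}"
    define Ip where "Ip = {i\<in>I. M i v0 > 0}"
    define In where "In = {i\<in>I. M i v0 < 0}"
    define I' where "I' = W0 ` I0 \<union> (\<lambda>(i,j). W2 i j) ` (Ip \<times> In)"
    define M' where "M' k v = Fp M v0 (\<lambda>i. M i v) k" for k v
    define b' where "b' = Fp M v0 b"
    have f0: "finite I0" "finite Ip" "finite In" using fin by (auto simp: I0_def Ip_def In_def)
    have finI': "finite I'" using f0 by (simp add: I'_def)
    have inf': "\<forall>x. \<exists>k\<in>I'. b' k < (\<Sum>v\<in>V'. M' k v * x v)"
    proof (rule ccontr)
      assume "\<not> ?thesis"
      then obtain x where x: "\<forall>k\<in>I'. (\<Sum>v\<in>V'. M' k v * x v) \<le> b' k" by (auto simp: not_less)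
      define s where "s i = (\<Sum>v\<in>V'. M i v * x v)" for i
      have s0: "s i \<le> b i" if "i \<in> I0" for i
      proof -
        have "W0 i \<in> I'" using that by (auto simp: I'_def)
        thus ?thesis using x by (auto simp: M'_def b'_def s_def)
      qed
      have pair: "\<forall>i\<in>Ip. \<forall>j\<in>In. (- M j v0) * s i + M i v0 * s j \<le> (- M j v0) * b i + M i v0 * b j"
      proof (intro ballI)
        fix i j assume ij: "i \<in> Ip" "j \<in> In"
        have "W2 i j \<in> I'" using ij by (auto simp: I'_def)
        hence "(\<Sum>v\<in>V'. M' (W2 i j) v * x v) \<le> b' (W2 i j)" using x by auto
        moreover have "(\<Sum>v\<in>V'. M' (W2 i j) v * x v) = (- M j v0) * s i + M i v0 * s j"
          by (simp add: M'_def s_def sum_distrib_left sum.distrib[symmetric] algebra_simps)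
        ultimately show "(- M j v0) * s i + M i v0 * s j \<le> (- M j v0) * b i + M i v0 * b j"
          by (simp add: b'_def)
      qed
      obtain t where t: "\<forall>i\<in>Ip. M i v0 * t + s i \<le> b i" "\<forall>j\<in>In. M j v0 * t + s j \<le> b j"
        using fm_step_solution[OF f0(2,3) _ _ pair] by (auto simp: Ip_def In_def)
      define x' where "x' = x(v0 := t)"
      have ev: "(\<Sum>v\<in>insert v0 V'. M i v * x' v) = M i v0 * t + s i" for i
      proof -
        have "(\<Sum>v\<in>V'. M i v * x' v) = s i"
          unfolding s_def x'_def using insert.hyps(2) by (intro sum.cong) auto
        thus ?thesis using insert.hyps by (simp add: x'_def)
      qed
      have "\<forall>i\<in>I. (\<Sum>v\<in>insert v0 V'. M i v * x' v) \<le> b i"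
      proof
        fix i assume i: "i \<in> I"
        consider "i \<in> I0" | "i \<in> Ip" | "i \<in> In" using i unfolding I0_def Ip_def In_def by force
        thus "(\<Sum>v\<in>insert v0 V'. M i v * x' v) \<le> b i"
          by cases (use s0 t in \<open>auto simp: ev I0_def\<close>)
      qed
      thus False using inf by (meson not_le)
    qed
    obtain y' where y': "\<forall>k\<in>I'. 0 \<le> y' k" "\<forall>v\<in>V'. (\<Sum>k\<in>I'. y' k * M' k v) = 0"
      "(\<Sum>k\<in>I'. y' k * b' k) < 0"
      using insert.IH finI' inf' by blast
    define y where "y \<equiv> (\<lambda>i. (if i \<in> I0 then y' (W0 i) else 0)
        + (if i \<in> Ip then (\<Sum>j\<in>In. y' (W2 i j) * (- M j v0)) else 0)
        + (if i \<in> In then (\<Sum>i'\<in>Ip. y' (W2 i' i) * M i' v0) else 0))"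
    have tr: "(\<Sum>i\<in>I. y i * F i) = (\<Sum>k\<in>I'. y' k * Fp M v0 F k)" for F
      unfolding y_def I'_def I0_def Ip_def In_def by (rule fm_transfer[OF fin])
    have ynn: "\<forall>i\<in>I. 0 \<le> y i"
    proof
      fix i assume i: "i \<in> I"
      have a: "0 \<le> (\<Sum>j\<in>In. y' (W2 i j) * (- M j v0))" if "i \<in> Ip"
      proof (intro sum_nonneg mult_nonneg_nonneg)
        fix j assume j: "j \<in> In"
        hence "W2 i j \<in> I'" using that by (auto simp: I'_def)
        thus "0 \<le> y' (W2 i j)" using y' by auto
        show "0 \<le> - M j v0" using j by (simp add: In_def)
      qed
      have b: "0 \<le> (\<Sum>i'\<in>Ip. y' (W2 i' i) * M i' v0)" if "i \<in> In"
      proof (intro sum_nonneg mult_nonneg_nonneg)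
        fix j assume j: "j \<in> Ip"
        hence "W2 j i \<in> I'" using that by (auto simp: I'_def)
        thus "0 \<le> y' (W2 j i)" using y' by auto
        show "0 \<le> M j v0" using j by (simp add: Ip_def)
      qed
      have c: "0 \<le> y' (W0 i)" if "i \<in> I0" using y' that by (auto simp: I'_def)
      show "0 \<le> y i" using a b c by (simp add: y_def)
    qed
    have cv: "\<forall>v\<in>insert v0 V'. (\<Sum>i\<in>I. y i * M i v) = 0"
    proof
      fix v assume v: "v \<in> insert v0 V'"
      show "(\<Sum>i\<in>I. y i * M i v) = 0"
      proof (cases "v = v0")
        case True
        have "(\<Sum>k\<in>I'. y' k * Fp M v0 (\<lambda>i. M i v0) k) = 0"
          by (rule sum.neutral) (auto simp: I'_def I0_def)
        thus ?thesis using tr True by simp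
      next
        case False
        hence "v \<in> V'" using v by auto
        thus ?thesis using tr[of "\<lambda>i. M i v"] y'(2) by (simp add: M'_def)
      qed
    qed
    have "(\<Sum>i\<in>I. y i * b i) < 0" using tr[of b] y'(3) by (simp add: b'_def)
    thus "\<exists>y. (\<forall>i\<in>I. 0 \<le> y i) \<and> (\<forall>v\<in>insert v0 V'. (\<Sum>i\<in>I. y i * M i v) = 0) \<and> (\<Sum>i\<in>I. y i * b i) < 0"
      using ynn cv by blast
  qed
qed

lemma farkas:
  fixes I :: "'r set" and V :: "'v set" and M :: "'r \<Rightarrow> 'v \<Rightarrow> real" and b :: "'r \<Rightarrow> real"
  assumes fI: "finite I" and fV: "finite V" and inf: "\<forall>x. \<exists>i\<in>I. b i < (\<Sum>v\<in>V. M i v * x v)"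
  shows "\<exists>y. (\<forall>i\<in>I. 0 \<le> y i) \<and> (\<forall>v\<in>V. (\<Sum>i\<in>I. y i * M i v) = 0) \<and> (\<Sum>i\<in>I. y i * b i) < 0"
proof -
  define M' where "M' k = (case k of L r \<Rightarrow> M r | _ \<Rightarrow> (\<lambda>_. 0))" for k
  define b' where "b' k = (case k of L r \<Rightarrow> b r | _ \<Rightarrow> 0)" for k
  have "\<forall>x. \<exists>k\<in>L ` I. b' k < (\<Sum>v\<in>V. M' k v * x v)"
    using inf by (auto simp: M'_def b'_def)
  then obtain y' where y': "\<forall>k\<in>L ` I. 0 \<le> y' k" "\<forall>v\<in>V. (\<Sum>k\<in>L ` I. y' k * M' k v) = 0"
    "(\<Sum>k\<in>L ` I. y' k * b' k) < 0"
    using farkas_ix[OF fV, rule_format, where I="L ` I" and M=M' and b=b'] fI by blast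
  have inj: "inj_on L I" by (auto simp: inj_on_def)
  show ?thesis
    using y' by (intro exI[of _ "\<lambda>r. y' (L r)"]) (simp add: sum.reindex[OF inj] M'_def b'_def)
qed

lemma sum_swap_lin:
  fixes y :: "'r \<Rightarrow> real"
  shows "(\<Sum>i\<in>I. y i * (\<Sum>v\<in>V. M i v * x v)) = (\<Sum>v\<in>V. (\<Sum>i\<in>I. y i * M i v) * x v)"
  by (simp add: sum_distrib_left sum_distrib_right mult.assoc, subst sum.swap, simp)

lemma lp_attain:
  fixes I :: "'r set" and V :: "'v set" and M :: "'r \<Rightarrow> 'v \<Rightarrow> real" and b :: "'r \<Rightarrow> real"
    and c :: "'v \<Rightarrow> real"
  defines "F \<equiv> {x. \<forall>i\<in>I. (\<Sum>v\<in>V. M i v * x v) \<le> b i}"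
  assumes fI: "finite I" and fV: "finite V" and ne: "F \<noteq> {}"
    and bd: "\<forall>x\<in>F. (\<Sum>v\<in>V. c v * x v) \<le> B"
  shows "\<exists>x\<in>F. \<forall>z\<in>F. (\<Sum>v\<in>V. c v * z v) \<le> (\<Sum>v\<in>V. c v * x v)"
proof -
  define obj where "obj x = (\<Sum>v\<in>V. c v * x v)" for x
  define s where "s = (SUP x\<in>F. obj x)"
  have bdd: "bdd_above (obj ` F)" using bd by (auto simp: obj_def bdd_above_def)
  have le_s: "obj x \<le> s" if "x \<in> F" for x unfolding s_def by (rule cSUP_upper[OF that bdd])
  show ?thesis
  proof (rule ccontr)
    assume nex: "\<not> ?thesis"
    define I' where "I' = Some ` I \<union> {None}"
    define M' where "M' k = (case k of Some i \<Rightarrow> M i | None \<Rightarrow> (\<lambda>v. - c v))" for k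
    define b' where "b' k = (case k of Some i \<Rightarrow> b i | None \<Rightarrow> - s)" for k
    have inf: "\<forall>x. \<exists>k\<in>I'. b' k < (\<Sum>v\<in>V. M' k v * x v)"
    proof
      fix x
      show "\<exists>k\<in>I'. b' k < (\<Sum>v\<in>V. M' k v * x v)"
      proof (rule ccontr)
        assume "\<not> ?thesis"
        hence h: "\<forall>k\<in>I'. (\<Sum>v\<in>V. M' k v * x v) \<le> b' k" by (auto simp: not_less)
        hence xF: "x \<in> F" by (auto simp: F_def I'_def M'_def b'_def)
        have "- obj x \<le> - s" using h by (auto simp: I'_def M'_def b'_def obj_def sum_negf)
        hence "\<forall>z\<in>F. obj z \<le> obj x" using le_s by force
        thus False using nex xF by (auto simp: obj_def)
      qed
    qed
    have fI': "finite I'" using fI by (simp add: I'_def)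
    obtain y where y: "\<forall>k\<in>I'. 0 \<le> y k" "\<forall>v\<in>V. (\<Sum>k\<in>I'. y k * M' k v) = 0"
      "(\<Sum>k\<in>I'. y k * b' k) < 0"
      using farkas[OF fI' fV inf] by blast
    have inj: "inj_on Some I" by auto
    have splitI: "(\<Sum>k\<in>I'. f k) = (\<Sum>i\<in>I. f (Some i)) + f None" for f :: "_ \<Rightarrow> real"
      unfolding I'_def using fI by (subst sum.union_disjoint) (auto simp: sum.reindex[OF inj])
    define t where "t = y None"
    have t0: "0 \<le> t" using y by (simp add: t_def I'_def)
    have key: "t * obj x \<le> (\<Sum>i\<in>I. y (Some i) * b i)" if "x \<in> F" for x
    proof -
      have "0 = (\<Sum>v\<in>V. (\<Sum>k\<in>I'. y k * M' k v) * x v)" using y(2) by simp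
      also have "\<dots> = (\<Sum>k\<in>I'. y k * (\<Sum>v\<in>V. M' k v * x v))" by (simp add: sum_swap_lin)
      also have "\<dots> = (\<Sum>i\<in>I. y (Some i) * (\<Sum>v\<in>V. M i v * x v)) - t * obj x"
        by (simp add: splitI M'_def t_def obj_def sum_negf)
      also have "\<dots> \<le> (\<Sum>i\<in>I. y (Some i) * b i) - t * obj x"
        using that y(1) by (auto simp: F_def I'_def intro!: sum_mono mult_left_mono)
      finally show ?thesis by simp
    qed
    have neg: "(\<Sum>i\<in>I. y (Some i) * b i) - t * s < 0" using y(3) by (simp add: splitI b'_def t_def)
    obtain x0 where x0: "x0 \<in> F" using ne by auto
    show False
    proof (cases "t = 0")
      case True thus False using key[OF x0] neg by simp
    next
      case False
      hence tp: "t > 0" using t0 by simp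
      have "obj x \<le> (\<Sum>i\<in>I. y (Some i) * b i) / t" if "x \<in> F" for x
        using key[OF that] tp by (simp add: field_simps)
      hence "s \<le> (\<Sum>i\<in>I. y (Some i) * b i) / t"
        unfolding s_def using ne by (intro cSUP_least) auto
      thus False using neg tp by (simp add: field_simps)
    qed
  qed
qed



lemma abel_nonneg:
  fixes f u :: "'a \<Rightarrow> real"
  assumes "finite I" "\<forall>i\<in>I. 0 \<le> f i" "\<forall>i\<in>I. 0 \<le> (\<Sum>j\<in>{j\<in>I. f i \<le> f j}. u j)"
  shows "0 \<le> (\<Sum>i\<in>I. f i * u i)"
  using assms
proof (induction "card I" arbitrary: I f rule: less_induct)
  case less
  show ?case
  proof (cases "I = {}")
    case True thus ?thesis by simp
  next
    case False
    define c where "c = Min (f ` I)"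
    have "c \<in> f ` I" unfolding c_def using False less.prems(1) by (intro Min_in) auto
    then obtain i0 where i0: "i0 \<in> I" "f i0 = c" by auto
    have cle: "c \<le> f i" if "i \<in> I" for i using that less.prems(1) by (simp add: c_def)
    have c0: "0 \<le> c" using i0 less.prems(2) by auto
    define I' where "I' = {i\<in>I. c < f i}"
    have I'sub: "I' \<subseteq> I" by (auto simp: I'_def)
    have cardlt: "card I' < card I"
      using i0 less.prems(1) by (intro psubset_card_mono) (auto simp: I'_def)
    have "0 \<le> (\<Sum>i\<in>I'. (f i - c) * u i)"
    proof (rule less.hyps[OF cardlt])
      show "finite I'" using less.prems(1) I'sub finite_subset by blast
      show "\<forall>i\<in>I'. 0 \<le> f i - c" by (auto simp: I'_def)
      show "\<forall>i\<in>I'. 0 \<le> (\<Sum>j\<in>{j\<in>I'. f i - c \<le> f j - c}. u j)"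
      proof
        fix i assume i: "i \<in> I'"
        have "{j\<in>I'. f i - c \<le> f j - c} = {j\<in>I. f i \<le> f j}" using i by (auto simp: I'_def)
        thus "0 \<le> (\<Sum>j\<in>{j\<in>I'. f i - c \<le> f j - c}. u j)" using less.prems(3) i I'sub by auto
      qed
    qed
    moreover have "(\<Sum>i\<in>I'. (f i - c) * u i) = (\<Sum>i\<in>I. (f i - c) * u i)"
      using less.prems(1) I'sub cle
      by (intro sum.mono_neutral_left) (auto simp: I'_def less_le)
    moreover have "0 \<le> (\<Sum>i\<in>I. u i)"
    proof -
      have "{j\<in>I. f i0 \<le> f j} = I" using i0 cle by auto
      moreover have "0 \<le> (\<Sum>j\<in>{j\<in>I. f i0 \<le> f j}. u j)" using less.prems(3) i0(1) by blast
      ultimately show ?thesis by simp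
    qed
    moreover have "(\<Sum>i\<in>I. f i * u i) = (\<Sum>i\<in>I. (f i - c) * u i) + c * (\<Sum>i\<in>I. u i)"
      by (simp add: sum_distrib_left sum.distrib[symmetric] algebra_simps)
    ultimately show ?thesis using c0 by simp
  qed
qed

lemma abel_zero:
  fixes f u :: "'a \<Rightarrow> real"
  assumes "finite I" "(\<Sum>i\<in>I. u i) = 0" "\<forall>i\<in>I. 0 \<le> (\<Sum>j\<in>{j\<in>I. f i \<le> f j}. u j)"
  shows "0 \<le> (\<Sum>i\<in>I. f i * u i)"
proof (cases "I = {}")
  case True thus ?thesis by simp
next
  case False
  define c where "c = Min (f ` I)"
  have cle: "c \<le> f i" if "i \<in> I" for i using that assms(1) by (simp add: c_def)
  have "0 \<le> (\<Sum>i\<in>I. (f i - c) * u i)"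
    using assms cle by (intro abel_nonneg) auto
  moreover have "(\<Sum>i\<in>I. f i * u i) = (\<Sum>i\<in>I. (f i - c) * u i) + c * (\<Sum>i\<in>I. u i)"
    by (simp add: sum_distrib_left sum.distrib[symmetric] algebra_simps)
  ultimately show ?thesis using assms(2) by simp
qed

lemma sorted_prefix_set:
  fixes \<kappa> :: "'a \<Rightarrow> 'k::linorder"
  assumes srt: "sorted (map \<kappa> \<sigma>)" and sub: "U \<subseteq> set \<sigma>"
    and dc: "\<forall>j\<in>set \<sigma>. \<forall>i\<in>U. \<kappa> j \<le> \<kappa> i \<longrightarrow> j \<in> U"
  shows "\<exists>k. set (take k \<sigma>) = U"
proof (intro exI[of _ "length (takeWhile (\<lambda>j. j \<in> U) \<sigma>)"])
  let ?P = "\<lambda>j. j \<in> U"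
  have tk: "take (length (takeWhile ?P \<sigma>)) \<sigma> = takeWhile ?P \<sigma>"
    by (metis append_eq_conv_conj takeWhile_dropWhile_id)
  have "set (takeWhile ?P \<sigma>) = U"
  proof
    show "set (takeWhile ?P \<sigma>) \<subseteq> U" by (auto dest: set_takeWhileD)
    show "U \<subseteq> set (takeWhile ?P \<sigma>)"
    proof
      fix j assume j: "j \<in> U"
      show "j \<in> set (takeWhile ?P \<sigma>)"
      proof (rule ccontr)
        assume nj: "j \<notin> set (takeWhile ?P \<sigma>)"
        have jin: "j \<in> set (dropWhile ?P \<sigma>)"
          using j sub nj takeWhile_dropWhile_id[of ?P \<sigma>] by (metis Un_iff set_append subsetD)
        then obtain x rest where dw: "dropWhile ?P \<sigma> = x # rest"
          by (cases "dropWhile ?P \<sigma>") auto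
        have xU: "x \<notin> U" using dw by (metis dropWhile_eq_Cons_conv)
        have xin: "x \<in> set \<sigma>" using dw by (metis list.set_intros(1) set_dropWhileD)
        have s2: "sorted (map \<kappa> (x # rest))"
          using srt takeWhile_dropWhile_id[of ?P \<sigma>] dw by (metis map_append sorted_append)
        have "\<kappa> x \<le> \<kappa> j" using s2 jin dw by auto
        thus False using dc xin j xU by blast
      qed
    qed
  qed
  thus "set (take (length (takeWhile ?P \<sigma>)) \<sigma>) = U" using tk by simp
qed



definition dl :: "'g set \<Rightarrow> ('a \<Rightarrow> 'g \<Rightarrow> real) \<Rightarrow> ('a \<Rightarrow> 'g \<Rightarrow> real) \<Rightarrow> 'a \<Rightarrow> real" where
  "dl G d X i = (\<Sum>j\<in>G. d i j * X i j)"

lemma delay_dl: "delay G d S X = (\<Sum>i\<in>S. dl G d X i)"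
  by (simp add: delay_def dl_def)
lemma delay_single: "delay G d {i} X = dl G d X i"
  by (simp add: delay_def dl_def)
lemma pay_sum: "pay G S X p = (\<Sum>i\<in>S. pay G {i} X p)"
  by (simp add: pay_def)
lemma LP_obj_dl: "LP_obj A G d lam X = (\<Sum>i\<in>A. lam i * dl G d X i)"
  by (simp add: LP_obj_def dl_def)

datatype ('a,'g,'c) rw = Nn 'a 'g | Cc 'a 'c | Sp 'g | Ob | Dl 'a | Dm 'a

primrec Mc :: "('a\<Rightarrow>'g\<Rightarrow>'c\<Rightarrow>real) \<Rightarrow> ('a\<Rightarrow>'g\<Rightarrow>real) \<Rightarrow> ('a\<Rightarrow>real) \<Rightarrow> ('a,'g,'c) rw \<Rightarrow> 'a\<times>'g \<Rightarrow> real" where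
  "Mc a d lam (Nn i j) = (\<lambda>v. if v = (i,j) then -1 else 0)"
| "Mc a d lam (Cc i k) = (\<lambda>(i',j). if i' = i then - a i j k else 0)"
| "Mc a d lam (Sp j) = (\<lambda>(i,j'). if j' = j then 1 else 0)"
| "Mc a d lam Ob = (\<lambda>(i,j). lam i * d i j)"
| "Mc a d lam (Dl i) = (\<lambda>(i',j). if i' = i then d i j else 0)"
| "Mc a d lam (Dm i) = (\<lambda>(i',j). if i' = i then - d i j else 0)"

primrec bc :: "('a\<Rightarrow>'c\<Rightarrow>real) \<Rightarrow> real \<Rightarrow> ('a \<Rightarrow> real) \<Rightarrow> ('a,'g,'c) rw \<Rightarrow> real" where
  "bc r th D (Nn i j) = 0"
| "bc r th D (Cc i k) = - r i k"
| "bc r th D (Sp j) = 1"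
| "bc r th D Ob = th"
| "bc r th D (Dl i) = D i"
| "bc r th D (Dm i) = - D i"

definition Xo :: "('a\<times>'g \<Rightarrow> real) \<Rightarrow> 'a \<Rightarrow> 'g \<Rightarrow> real" where "Xo x = (\<lambda>i j. x (i,j))"

lemma Xo_case[simp]: "Xo (\<lambda>(i,j). X i j) = X" by (simp add: Xo_def)

context
  fixes A :: "'a set" and G :: "'g set" and C :: "'c set"
    and a :: "'a \<Rightarrow> 'g \<Rightarrow> 'c \<Rightarrow> real" and d :: "'a \<Rightarrow> 'g \<Rightarrow> real" and lam :: "'a \<Rightarrow> real"
  assumes fA: "finite A" and fG: "finite G" and fC: "finite C"
begin

definition ev :: "('a,'g,'c) rw \<Rightarrow> ('a\<times>'g \<Rightarrow> real) \<Rightarrow> real" where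
  "ev \<rho> x = (\<Sum>v\<in>A\<times>G. Mc a d lam \<rho> v * x v)"

lemma sumAG: "(\<Sum>v\<in>A\<times>G. f v) = (\<Sum>i\<in>A. \<Sum>j\<in>G. f (i,j))"
  by (simp add: sum.cartesian_product)

lemma sum_if_outer: "(\<Sum>i'\<in>A. \<Sum>j\<in>G. if i' = i then f j else 0) = (if i \<in> A then (\<Sum>j\<in>G. f j) else 0)"
proof -
  have "(\<Sum>i'\<in>A. \<Sum>j\<in>G. if i' = i then f j else 0) = (\<Sum>i'\<in>A. if i' = i then (\<Sum>j\<in>G. f j) else 0)"
    by (intro sum.cong) auto
  also have "\<dots> = (if i \<in> A then (\<Sum>j\<in>G. f j) else 0)" using fA by (simp add: sum.delta)
  finally show ?thesis .
qed

lemma ev_Nn: "i \<in> A \<Longrightarrow> j \<in> G \<Longrightarrow> ev (Nn i j) x = - x (i,j)"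
proof -
  assume "i \<in> A" "j \<in> G"
  hence "(\<Sum>v\<in>A\<times>G. (if v = (i,j) then -1 else 0) * x v) = - x (i,j)"
    using fA fG by (simp add: if_distrib[of "\<lambda>z. z * _"] sum.delta cong: if_cong)
  thus ?thesis by (simp add: ev_def)
qed

lemma ev_Cc: "i \<in> A \<Longrightarrow> ev (Cc i k) x = - (\<Sum>j\<in>G. a i j k * x (i,j))"
  using fA by (simp add: ev_def sumAG if_distrib[of "\<lambda>z. z * _"] sum_if_outer sum_negf cong: if_cong)

lemma ev_Sp: "j \<in> G \<Longrightarrow> ev (Sp j) x = (\<Sum>i\<in>A. x (i,j))"
  using fG by (simp add: ev_def sumAG if_distrib[of "\<lambda>z. z * _"] sum.delta cong: if_cong)

lemma ev_Ob: "ev Ob x = LP_obj A G d lam (Xo x)"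
  by (simp add: ev_def sumAG LP_obj_def Xo_def sum_distrib_left mult.assoc)

lemma ev_Dl: "i \<in> A \<Longrightarrow> ev (Dl i) x = dl G d (Xo x) i"
  using fA by (simp add: ev_def sumAG dl_def Xo_def if_distrib[of "\<lambda>z. z * _"] sum_if_outer cong: if_cong)

lemma ev_Dm: "i \<in> A \<Longrightarrow> ev (Dm i) x = - dl G d (Xo x) i"
  using fA by (simp add: ev_def sumAG dl_def Xo_def if_distrib[of "\<lambda>z. z * _"] sum_if_outer sum_negf cong: if_cong)


definition "Iadm = (\<lambda>(i,j). Nn i j) ` (A\<times>G) \<union> (\<lambda>(i,k). Cc i k) ` (A\<times>C) \<union> Sp ` G"
definition "I1 = insert Ob Iadm"
definition "I3 = I1 \<union> Dl ` A \<union> Dm ` A"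

lemma fin_I: "finite Iadm" "finite I1" "finite I3"
  using fA fG fC by (auto simp: Iadm_def I1_def I3_def)

lemma sum_Iadm: "(\<Sum>\<rho>\<in>Iadm. F \<rho>) = (\<Sum>i\<in>A. \<Sum>j\<in>G. F (Nn i j)) + (\<Sum>i\<in>A. \<Sum>k\<in>C. F (Cc i k)) + (\<Sum>j\<in>G. F (Sp j))"
proof -
  have i1: "inj_on (\<lambda>(i,j). Nn i j) (A\<times>G)" by (auto simp: inj_on_def)
  have i2: "inj_on (\<lambda>(i,k). Cc i k) (A\<times>C)" by (auto simp: inj_on_def)
  have i3: "inj_on Sp G" by (auto simp: inj_on_def)
  have "(\<Sum>\<rho>\<in>Iadm. F \<rho>) = (\<Sum>\<rho>\<in>(\<lambda>(i,j). Nn i j) ` (A\<times>G) \<union> (\<lambda>(i,k). Cc i k) ` (A\<times>C). F \<rho>) + (\<Sum>\<rho>\<in>Sp ` G. F \<rho>)"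
    unfolding Iadm_def using fA fG fC by (intro sum.union_disjoint) auto
  also have "(\<Sum>\<rho>\<in>(\<lambda>(i,j). Nn i j) ` (A\<times>G) \<union> (\<lambda>(i,k). Cc i k) ` (A\<times>C). F \<rho>)
     = (\<Sum>\<rho>\<in>(\<lambda>(i,j). Nn i j) ` (A\<times>G). F \<rho>) + (\<Sum>\<rho>\<in>(\<lambda>(i,k). Cc i k) ` (A\<times>C). F \<rho>)"
    using fA fG fC by (intro sum.union_disjoint) auto
  moreover have "(\<Sum>\<rho>\<in>(\<lambda>(i,j). Nn i j) ` (A\<times>G). F \<rho>) = (\<Sum>i\<in>A. \<Sum>j\<in>G. F (Nn i j))"
    by (simp only: sum.reindex[OF i1] sum.cartesian_product comp_def) (simp add: case_prod_beta)
  moreover have "(\<Sum>\<rho>\<in>(\<lambda>(i,k). Cc i k) ` (A\<times>C). F \<rho>) = (\<Sum>i\<in>A. \<Sum>k\<in>C. F (Cc i k))"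
    by (simp only: sum.reindex[OF i2] sum.cartesian_product comp_def) (simp add: case_prod_beta)
  moreover have "(\<Sum>\<rho>\<in>Sp ` G. F \<rho>) = (\<Sum>j\<in>G. F (Sp j))"
    by (simp add: sum.reindex[OF i3])
  ultimately show ?thesis by simp
qed

lemma ball_Iadm: "(\<forall>\<rho>\<in>Iadm. P \<rho>) \<longleftrightarrow> (\<forall>i\<in>A. \<forall>j\<in>G. P (Nn i j)) \<and> (\<forall>i\<in>A. \<forall>k\<in>C. P (Cc i k)) \<and> (\<forall>j\<in>G. P (Sp j))"
  by (auto simp: Iadm_def)

lemma sum_I1: "(\<Sum>\<rho>\<in>I1. F \<rho>) = (\<Sum>\<rho>\<in>Iadm. F \<rho>) + F Ob"
proof -
  have "Ob \<notin> Iadm" by (auto simp: Iadm_def)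
  thus ?thesis using fin_I by (simp add: I1_def add.commute)
qed

lemma sum_I3: "(\<Sum>\<rho>\<in>I3. F \<rho>) = (\<Sum>\<rho>\<in>I1. F \<rho>) + (\<Sum>i\<in>A. F (Dl i)) + (\<Sum>i\<in>A. F (Dm i))"
proof -
  have iD: "inj_on Dl A" "inj_on Dm A" by (auto simp: inj_on_def)
  have "(\<Sum>\<rho>\<in>I3. F \<rho>) = (\<Sum>\<rho>\<in>I1 \<union> Dl ` A. F \<rho>) + (\<Sum>\<rho>\<in>Dm ` A. F \<rho>)"
    unfolding I3_def using fin_I fA by (intro sum.union_disjoint) (auto simp: I1_def Iadm_def)
  also have "(\<Sum>\<rho>\<in>I1 \<union> Dl ` A. F \<rho>) = (\<Sum>\<rho>\<in>I1. F \<rho>) + (\<Sum>\<rho>\<in>Dl ` A. F \<rho>)"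
    using fin_I fA by (intro sum.union_disjoint) (auto simp: I1_def Iadm_def)
  finally show ?thesis by (simp add: sum.reindex[OF iD(1)] sum.reindex[OF iD(2)])
qed

lemma adm_iff: "(\<forall>\<rho>\<in>Iadm. ev \<rho> x \<le> bc r th D \<rho>) \<longleftrightarrow> admissible_for A G C a r A (Xo x)"
proof -
  have "(\<forall>\<rho>\<in>Iadm. ev \<rho> x \<le> bc r th D \<rho>) \<longleftrightarrow>
     (\<forall>i\<in>A. \<forall>j\<in>G. 0 \<le> x (i,j)) \<and> (\<forall>i\<in>A. \<forall>k\<in>C. r i k \<le> (\<Sum>j\<in>G. a i j k * x (i,j))) \<and>
     (\<forall>j\<in>G. (\<Sum>i\<in>A. x (i,j)) \<le> 1)"
    unfolding ball_Iadm by (simp add: ev_Nn ev_Cc ev_Sp)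
  thus ?thesis
    by (auto simp: admissible_for_def nonneg_alloc_def CC_def supply_respecting_def Xo_def)
qed

end


context
  fixes A :: "'a set" and G :: "'g set" and C :: "'c set"
    and a :: "'a \<Rightarrow> 'g \<Rightarrow> 'c \<Rightarrow> real" and r :: "'a \<Rightarrow> 'c \<Rightarrow> real"
    and d :: "'a \<Rightarrow> 'g \<Rightarrow> real" and m :: "'a \<Rightarrow> real"
    and lam :: "'a \<Rightarrow> real" and p :: "'g \<Rightarrow> real" and \<alpha> :: "'a \<Rightarrow> 'c \<Rightarrow> real"
  assumes fA: "finite A" and fG: "finite G" and fC: "finite C"
    and r0: "\<forall>i\<in>A. \<forall>k\<in>C. r i k \<ge> 0"
    and d0: "\<forall>i\<in>A. \<forall>j\<in>G. d i j \<ge> 0"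
    and m0: "\<forall>i\<in>A. m i > 0"
    and ext: "extensible A G C a r d"
    and lam0: "\<forall>i\<in>A. lam i > 0"
    and p0: "\<forall>j\<in>G. p j \<ge> 0"
    and prp: "proper A G C a r d m lam p"
    and dopt: "DLP_optimal A G C a r d lam \<alpha> p"
begin

definition "th = DLP_obj A G C r \<alpha> p"
definition "cc i = (\<Sum>k\<in>C. \<alpha> i k * r i k)"

lemma dfeas: "DLP_feasible A G C a d lam \<alpha> p" using dopt by (simp add: DLP_optimal_def)

lemma e_nonneg:
  assumes adm: "admissible_for A G C a r A X" and i: "i \<in> A"
  shows "cc i - pay G {i} X p \<le> lam i * dl G d X i"
proof -
  have xn: "\<forall>j\<in>G. 0 \<le> X i j" using adm i by (auto simp: admissible_for_def nonneg_alloc_def)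
  have cci: "\<forall>k\<in>C. r i k \<le> (\<Sum>j\<in>G. a i j k * X i j)" using adm i by (auto simp: admissible_for_def CC_def)
  have an: "\<forall>k\<in>C. 0 \<le> \<alpha> i k" using dfeas i by (auto simp: DLP_feasible_def)
  have df: "\<forall>j\<in>G. (\<Sum>k\<in>C. a i j k * \<alpha> i k) - p j \<le> lam i * d i j" using dfeas i by (auto simp: DLP_feasible_def)
  have "cc i = (\<Sum>k\<in>C. \<alpha> i k * r i k)" by (simp add: cc_def)
  also have "\<dots> \<le> (\<Sum>k\<in>C. \<alpha> i k * (\<Sum>j\<in>G. a i j k * X i j))"
    using an cci by (intro sum_mono mult_left_mono) auto
  also have "\<dots> = (\<Sum>j\<in>G. (\<Sum>k\<in>C. a i j k * \<alpha> i k) * X i j)"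
    by (simp add: sum_distrib_left sum_distrib_right mult_ac, subst sum.swap, simp)
  finally have 1: "cc i \<le> (\<Sum>j\<in>G. (\<Sum>k\<in>C. a i j k * \<alpha> i k) * X i j)" .
  have "(\<Sum>j\<in>G. (\<Sum>k\<in>C. a i j k * \<alpha> i k) * X i j) - pay G {i} X p
      = (\<Sum>j\<in>G. ((\<Sum>k\<in>C. a i j k * \<alpha> i k) - p j) * X i j)"
    by (simp add: pay_def sum_subtractf[symmetric] algebra_simps)
  also have "\<dots> \<le> (\<Sum>j\<in>G. (lam i * d i j) * X i j)"
    using df xn by (intro sum_mono mult_right_mono) auto
  also have "\<dots> = lam i * dl G d X i" by (simp add: dl_def sum_distrib_left mult_ac)
  finally show ?thesis using 1 by simp
qed

lemma pay_le: "admissible_for A G C a r A X \<Longrightarrow> pay G A X p \<le> (\<Sum>j\<in>G. p j)"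
proof -
  assume adm: "admissible_for A G C a r A X"
  have "pay G A X p = (\<Sum>j\<in>G. p j * (\<Sum>i\<in>A. X i j))"
    by (simp add: pay_def sum_distrib_left, subst sum.swap, simp)
  also have "\<dots> \<le> (\<Sum>j\<in>G. p j * 1)"
    using adm p0 by (intro sum_mono mult_left_mono) (auto simp: admissible_for_def supply_respecting_def)
  finally show ?thesis by simp
qed

lemma weak_dual: "admissible_for A G C a r A X \<Longrightarrow> th \<le> LP_obj A G d lam X"
proof -
  assume adm: "admissible_for A G C a r A X"
  have "th = (\<Sum>i\<in>A. cc i) - (\<Sum>j\<in>G. p j)"
    by (simp add: th_def DLP_obj_def cc_def mult_ac)
  also have "\<dots> \<le> (\<Sum>i\<in>A. cc i) - pay G A X p" using pay_le[OF adm] by simp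
  also have "\<dots> = (\<Sum>i\<in>A. cc i - pay G {i} X p)" by (simp add: sum_subtractf pay_sum[of G A])
  also have "\<dots> \<le> (\<Sum>i\<in>A. lam i * dl G d X i)" using e_nonneg[OF adm] by (intro sum_mono) auto
  finally show ?thesis by (simp add: LP_obj_dl)
qed


lemma delta2: "finite A \<Longrightarrow> finite G \<Longrightarrow> i \<in> A \<Longrightarrow> j \<in> G \<Longrightarrow>
  (\<Sum>i'\<in>A. \<Sum>j'\<in>G. (if i = i' \<and> j = j' then f i' j' else (0::real))) = f i j"
proof -
  assume f: "finite A" "finite G" and ij: "i \<in> A" "j \<in> G"
  have "(\<Sum>i'\<in>A. \<Sum>j'\<in>G. (if i = i' \<and> j = j' then f i' j' else (0::real)))
     = (\<Sum>i'\<in>A. if i = i' then f i' j else 0)"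
    using f ij by (intro sum.cong) (auto simp: sum.delta)
  also have "\<dots> = f i j" using f ij by (simp add: sum.delta)
  finally show ?thesis .
qed

lemma coeff_I1: assumes ij: "i \<in> A" "j \<in> G"
  shows "(\<Sum>\<rho>\<in>I1 A G C. y \<rho> * Mc a d lam \<rho> (i,j)) =
    - y (Nn i j) - (\<Sum>k\<in>C. y (Cc i k) * a i j k) + y (Sp j) + y Ob * (lam i * d i j)"
proof -
  have 1: "(\<Sum>i'\<in>A. \<Sum>j'\<in>G. y (Nn i' j') * Mc a d lam (Nn i' j') (i,j)) = - y (Nn i j)"
  proof -
    have "(\<Sum>i'\<in>A. \<Sum>j'\<in>G. y (Nn i' j') * Mc a d lam (Nn i' j') (i,j))
      = (\<Sum>i'\<in>A. \<Sum>j'\<in>G. (if i = i' \<and> j = j' then - y (Nn i' j') else 0))"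
      by (intro sum.cong) auto
    thus ?thesis using delta2[OF fA fG ij] by simp
  qed
  have 2: "(\<Sum>i'\<in>A. \<Sum>k\<in>C. y (Cc i' k) * Mc a d lam (Cc i' k) (i,j)) = - (\<Sum>k\<in>C. y (Cc i k) * a i j k)"
  proof -
    have "(\<Sum>i'\<in>A. \<Sum>k\<in>C. y (Cc i' k) * Mc a d lam (Cc i' k) (i,j))
      = (\<Sum>i'\<in>A. if i' = i then - (\<Sum>k\<in>C. y (Cc i k) * a i j k) else 0)"
      by (intro sum.cong) (auto simp: sum_negf)
    thus ?thesis using fA ij by (simp add: sum.delta')
  qed
  have 3: "(\<Sum>j'\<in>G. y (Sp j') * Mc a d lam (Sp j') (i,j)) = y (Sp j)"
  proof -
    have "(\<Sum>j'\<in>G. y (Sp j') * Mc a d lam (Sp j') (i,j)) = (\<Sum>j'\<in>G. if j = j' then y (Sp j') else 0)"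
      by (intro sum.cong) auto
    thus ?thesis using fG ij by (simp add: sum.delta)
  qed
  show ?thesis
    unfolding sum_I1[OF fA fG fC] sum_Iadm[OF fA fG fC] 1 2 3 by simp
qed

lemma rhs_I1: "(\<Sum>\<rho>\<in>I1 A G C. y \<rho> * bc r t D \<rho>) =
    - (\<Sum>i\<in>A. \<Sum>k\<in>C. y (Cc i k) * r i k) + (\<Sum>j\<in>G. y (Sp j)) + y Ob * t"
  unfolding sum_I1[OF fA fG fC] sum_Iadm[OF fA fG fC] by (simp add: sum_negf)

lemma strong_exists: "\<exists>X. admissible_for A G C a r A X \<and> LP_obj A G d lam X \<le> th"
proof (rule ccontr)
  assume nex: "\<not> ?thesis"
  have inf: "\<forall>x. \<exists>\<rho>\<in>I1 A G C. bc r th (\<lambda>_. 0) \<rho> < (\<Sum>v\<in>A\<times>G. Mc a d lam \<rho> v * x v)"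
  proof
    fix x
    show "\<exists>\<rho>\<in>I1 A G C. bc r th (\<lambda>_. 0) \<rho> < (\<Sum>v\<in>A\<times>G. Mc a d lam \<rho> v * x v)"
    proof (rule ccontr)
      assume "\<not> ?thesis"
      hence h: "\<forall>\<rho>\<in>I1 A G C. ev A G a d lam \<rho> x \<le> bc r th (\<lambda>_. 0) \<rho>" by (auto simp: ev_def[OF fA fG fC] not_less)
      hence "admissible_for A G C a r A (Xo x)"
        using adm_iff[OF fA fG fC, where a=a and d=d and lam=lam and x=x and r=r and th=th and D="\<lambda>_. 0"]
        by (auto simp: I1_def[OF fA fG fC])
      moreover have "LP_obj A G d lam (Xo x) \<le> th"
        using h ev_Ob[OF fA fG fC] by (auto simp: I1_def[OF fA fG fC])
      ultimately show False using nex by blast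
    qed
  qed
  have fAG: "finite (A\<times>G)" using fA fG by simp
  obtain y where y: "\<forall>\<rho>\<in>I1 A G C. 0 \<le> y \<rho>" "\<forall>v\<in>A\<times>G. (\<Sum>\<rho>\<in>I1 A G C. y \<rho> * Mc a d lam \<rho> v) = 0"
    "(\<Sum>\<rho>\<in>I1 A G C. y \<rho> * bc r th (\<lambda>_. 0) \<rho>) < 0"
    using farkas[OF fin_I(2)[OF fA fG fC] fAG inf] by blast
  define \<beta> where "\<beta> i k = y (Cc i k)" for i k
  define q where "q j = y (Sp j)" for j
  define t where "t = y Ob"
  have \<beta>0: "\<forall>i\<in>A. \<forall>k\<in>C. 0 \<le> \<beta> i k" using y(1) by (auto simp: \<beta>_def I1_def[OF fA fG fC] Iadm_def[OF fA fG fC])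
  have q0: "\<forall>j\<in>G. 0 \<le> q j" using y(1) by (auto simp: q_def I1_def[OF fA fG fC] Iadm_def[OF fA fG fC])
  have t0: "0 \<le> t" using y(1) by (auto simp: t_def I1_def[OF fA fG fC])
  have ident: "(\<Sum>k\<in>C. a i j k * \<beta> i k) - q j \<le> t * (lam i * d i j)" if "i \<in> A" "j \<in> G" for i j
  proof -
    have "0 \<le> y (Nn i j)" using y(1) that by (auto simp: I1_def[OF fA fG fC] Iadm_def[OF fA fG fC])
    moreover have "- y (Nn i j) - (\<Sum>k\<in>C. y (Cc i k) * a i j k) + y (Sp j) + y Ob * (lam i * d i j) = 0"
      using y(2) that coeff_I1[OF that, of y] by auto
    ultimately show ?thesis by (simp add: \<beta>_def q_def t_def mult_ac)
  qed
  have gap: "th < (\<Sum>i\<in>A. \<Sum>k\<in>C. r i k * \<beta> i k) - (\<Sum>j\<in>G. q j) + (1 - t) * th"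
    using y(3) rhs_I1[of y th] by (simp add: \<beta>_def q_def t_def mult_ac algebra_simps)
  have dopt': "\<forall>\<beta>' q'. DLP_feasible A G C a d lam \<beta>' q' \<longrightarrow> DLP_obj A G C r \<beta>' q' \<le> th"
    using dopt by (simp add: DLP_optimal_def th_def)
  show False
  proof (cases "t = 0")
    case True
    define \<alpha>' where "\<alpha>' i k = \<alpha> i k + \<beta> i k" for i k
    define p' where "p' j = p j + q j" for j
    have "DLP_feasible A G C a d lam \<alpha>' p'"
    proof -
      have "\<forall>i\<in>A. \<forall>j\<in>G. (\<Sum>k\<in>C. a i j k * \<alpha>' i k) - p' j \<le> lam i * d i j"
      proof (intro ballI)
        fix i j assume ij: "i \<in> A" "j \<in> G"
        have "(\<Sum>k\<in>C. a i j k * \<alpha> i k) - p j \<le> lam i * d i j" using dfeas ij by (auto simp: DLP_feasible_def)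
        moreover have "(\<Sum>k\<in>C. a i j k * \<beta> i k) - q j \<le> 0" using ident[OF ij] True by simp
        ultimately show "(\<Sum>k\<in>C. a i j k * \<alpha>' i k) - p' j \<le> lam i * d i j"
          by (simp add: \<alpha>'_def p'_def distrib_left sum.distrib)
      qed
      thus ?thesis using dfeas \<beta>0 q0 by (auto simp: DLP_feasible_def \<alpha>'_def p'_def)
    qed
    hence "DLP_obj A G C r \<alpha>' p' \<le> th" using dopt' by blast
    moreover have "DLP_obj A G C r \<alpha>' p' = th + ((\<Sum>i\<in>A. \<Sum>k\<in>C. r i k * \<beta> i k) - (\<Sum>j\<in>G. q j))"
      by (simp add: th_def DLP_obj_def \<alpha>'_def p'_def distrib_left sum.distrib)
    ultimately show False using gap True by simp
  next
    case False
    hence tp: "0 < t" using t0 by simp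
    define \<alpha>' where "\<alpha>' i k = \<beta> i k / t" for i k
    define p' where "p' j = q j / t" for j
    have "DLP_feasible A G C a d lam \<alpha>' p'"
    proof -
      have "\<forall>i\<in>A. \<forall>j\<in>G. (\<Sum>k\<in>C. a i j k * \<alpha>' i k) - p' j \<le> lam i * d i j"
      proof (intro ballI)
        fix i j assume ij: "i \<in> A" "j \<in> G"
        have "(\<Sum>k\<in>C. a i j k * \<alpha>' i k) - p' j = ((\<Sum>k\<in>C. a i j k * \<beta> i k) - q j) / t"
          by (simp add: \<alpha>'_def p'_def sum_divide_distrib diff_divide_distrib)
        also have "\<dots> \<le> (t * (lam i * d i j)) / t" using ident[OF ij] tp by (intro divide_right_mono) auto
        finally show "(\<Sum>k\<in>C. a i j k * \<alpha>' i k) - p' j \<le> lam i * d i j" using tp by simp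
      qed
      thus ?thesis using \<beta>0 q0 tp by (auto simp: DLP_feasible_def \<alpha>'_def p'_def)
    qed
    hence "DLP_obj A G C r \<alpha>' p' \<le> th" using dopt' by blast
    moreover have "DLP_obj A G C r \<alpha>' p' = ((\<Sum>i\<in>A. \<Sum>k\<in>C. r i k * \<beta> i k) - (\<Sum>j\<in>G. q j)) / t"
      by (simp add: DLP_obj_def \<alpha>'_def p'_def sum_divide_distrib diff_divide_distrib)
    moreover have "t * th < (\<Sum>i\<in>A. \<Sum>k\<in>C. r i k * \<beta> i k) - (\<Sum>j\<in>G. q j)"
      using gap by (simp add: algebra_simps)
    ultimately show False using tp by (simp add: field_simps)
  qed
qed


lemma opt_iff: "LP_optimal A G C a r d lam X \<longleftrightarrow> admissible_for A G C a r A X \<and> LP_obj A G d lam X \<le> th"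
proof
  assume o: "LP_optimal A G C a r d lam X"
  obtain X0 where X0: "admissible_for A G C a r A X0" "LP_obj A G d lam X0 \<le> th" using strong_exists by blast
  have "LP_obj A G d lam X \<le> LP_obj A G d lam X0" using o X0(1) unfolding LP_optimal_def by blast
  moreover have "admissible_for A G C a r A X" using o unfolding LP_optimal_def by blast
  ultimately show "admissible_for A G C a r A X \<and> LP_obj A G d lam X \<le> th"
    using X0(2) by linarith
next
  assume h: "admissible_for A G C a r A X \<and> LP_obj A G d lam X \<le> th"
  have "\<forall>Y. admissible_for A G C a r A Y \<longrightarrow> LP_obj A G d lam X \<le> LP_obj A G d lam Y"
  proof (intro allI impI)
    fix Y assume "admissible_for A G C a r A Y"
    hence "th \<le> LP_obj A G d lam Y" by (rule weak_dual)
    thus "LP_obj A G d lam X \<le> LP_obj A G d lam Y" using h by linarith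
  qed
  thus "LP_optimal A G C a r d lam X" using h unfolding LP_optimal_def by blast
qed

lemma opt_exists: "\<exists>X. LP_optimal A G C a r d lam X"
  using strong_exists opt_iff by blast

lemma opt_val: "LP_optimal A G C a r d lam X \<Longrightarrow> LP_obj A G d lam X = th"
proof -
  assume o: "LP_optimal A G C a r d lam X"
  hence h: "admissible_for A G C a r A X" "LP_obj A G d lam X \<le> th" using opt_iff by blast+
  have "th \<le> LP_obj A G d lam X" using weak_dual[OF h(1)] .
  thus ?thesis using h(2) by linarith
qed

lemma CS: assumes o: "LP_optimal A G C a r d lam X" and i: "i \<in> A"
  shows "pay G {i} X p = cc i - lam i * dl G d X i"
proof -
  have adm: "admissible_for A G C a r A X" using o by (simp add: LP_optimal_def)
  define e where "e i = lam i * dl G d X i - (cc i - pay G {i} X p)" for i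
  have e0: "\<forall>i\<in>A. 0 \<le> e i" using e_nonneg[OF adm] by (auto simp: e_def)
  have "(\<Sum>i\<in>A. e i) = LP_obj A G d lam X - (\<Sum>i\<in>A. cc i) + pay G A X p"
    by (simp add: e_def sum_subtractf sum.distrib LP_obj_dl pay_sum[of G A])
  also have "\<dots> \<le> LP_obj A G d lam X - (\<Sum>i\<in>A. cc i) + (\<Sum>j\<in>G. p j)" using pay_le[OF adm] by simp
  also have "\<dots> = 0" using opt_val[OF o] by (simp add: th_def DLP_obj_def cc_def mult_ac)
  finally have "(\<Sum>i\<in>A. e i) \<le> 0" .
  moreover have "0 \<le> (\<Sum>i\<in>A. e i)" using e0 by (intro sum_nonneg) auto
  ultimately have "(\<Sum>i\<in>A. e i) = 0" by linarith
  hence "\<forall>i\<in>A. e i = 0" using e0 fA sum_nonneg_eq_0_iff by blast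
  thus ?thesis using i by (simp add: e_def)
qed

lemma feas_iff: "(\<forall>\<rho>\<in>I1 A G C. ev A G a d lam \<rho> x \<le> bc r th D \<rho>) \<longleftrightarrow> LP_optimal A G C a r d lam (Xo x)"
proof -
  have "(\<forall>\<rho>\<in>I1 A G C. ev A G a d lam \<rho> x \<le> bc r th D \<rho>) \<longleftrightarrow>
    (\<forall>\<rho>\<in>Iadm A G C. ev A G a d lam \<rho> x \<le> bc r th D \<rho>) \<and> ev A G a d lam Ob x \<le> th"
    by (auto simp: I1_def[OF fA fG fC])
  also have "\<dots> \<longleftrightarrow> admissible_for A G C a r A (Xo x) \<and> LP_obj A G d lam (Xo x) \<le> th"
    using adm_iff[OF fA fG fC, where a=a and d=d and lam=lam and x=x and r=r and th=th and D=D]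
      ev_Ob[OF fA fG fC] by simp
  finally show ?thesis using opt_iff by simp
qed

lemma x_bounds: assumes "LP_optimal A G C a r d lam X" "i \<in> A" "j \<in> G"
  shows "0 \<le> X i j" "X i j \<le> 1"
proof -
  have adm: "admissible_for A G C a r A X" using assms by (simp add: LP_optimal_def)
  hence nn: "\<forall>i\<in>A. \<forall>j\<in>G. 0 \<le> X i j" by (simp add: admissible_for_def nonneg_alloc_def)
  thus "0 \<le> X i j" using assms by auto
  have "X i j \<le> (\<Sum>i'\<in>A. X i' j)" using nn assms fA by (intro member_le_sum) auto
  also have "\<dots> \<le> 1" using adm assms by (auto simp: admissible_for_def supply_respecting_def)
  finally show "X i j \<le> 1" .
qed

lemma attain: assumes T: "T \<subseteq> A"
  shows "\<exists>X. LP_optimal A G C a r d lam X \<and> (\<forall>Y. LP_optimal A G C a r d lam Y \<longrightarrow> delay G d T Y \<le> delay G d T X)"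
proof -
  define c where "c v = (case v of (i,j) \<Rightarrow> if i \<in> T then d i j else 0)" for v
  define F where "F = {x. \<forall>\<rho>\<in>I1 A G C. (\<Sum>v\<in>A\<times>G. Mc a d lam \<rho> v * x v) \<le> bc r th (\<lambda>_. 0) \<rho>}"
  have memF: "x \<in> F \<longleftrightarrow> LP_optimal A G C a r d lam (Xo x)" for x
    using feas_iff[of x "\<lambda>_. 0"] by (simp add: F_def ev_def[OF fA fG fC])
  have cval: "(\<Sum>v\<in>A\<times>G. c v * x v) = delay G d T (Xo x)" for x
  proof -
    have "(\<Sum>v\<in>A\<times>G. c v * x v) = (\<Sum>i\<in>A. \<Sum>j\<in>G. c (i,j) * x (i,j))"
      by (simp add: sum.cartesian_product)
    also have "\<dots> = (\<Sum>i\<in>A. if i \<in> T then (\<Sum>j\<in>G. d i j * x (i,j)) else 0)"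
      by (intro sum.cong) (auto simp: c_def)
    also have "\<dots> = delay G d T (Xo x)" using sum_if_sub[OF fA T] by (simp add: delay_def Xo_def)
    finally show ?thesis .
  qed
  obtain X0 where X0: "LP_optimal A G C a r d lam X0" using opt_exists by blast
  have ne: "F \<noteq> {}" using memF[of "\<lambda>(i,j). X0 i j"] X0 by auto
  have bd: "\<forall>x\<in>F. (\<Sum>v\<in>A\<times>G. c v * x v) \<le> (\<Sum>v\<in>A\<times>G. \<bar>c v\<bar>)"
  proof
    fix x assume "x \<in> F"
    hence o: "LP_optimal A G C a r d lam (Xo x)" using memF by simp
    show "(\<Sum>v\<in>A\<times>G. c v * x v) \<le> (\<Sum>v\<in>A\<times>G. \<bar>c v\<bar>)"
    proof (intro sum_mono)
      fix v assume v: "v \<in> A\<times>G"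
      obtain i j where ij: "v = (i,j)" "i \<in> A" "j \<in> G" using v by auto
      have "0 \<le> x v" "x v \<le> 1" using x_bounds[OF o ij(2,3)] ij by (auto simp: Xo_def)
      hence "\<bar>c v\<bar> * \<bar>x v\<bar> \<le> \<bar>c v\<bar> * 1" by (intro mult_left_mono) auto
      hence "\<bar>c v * x v\<bar> \<le> \<bar>c v\<bar>" by (simp add: abs_mult)
      thus "c v * x v \<le> \<bar>c v\<bar>" by simp
    qed
  qed
  obtain xs where xs: "xs \<in> F" "\<forall>z\<in>F. (\<Sum>v\<in>A\<times>G. c v * z v) \<le> (\<Sum>v\<in>A\<times>G. c v * xs v)"
    using lp_attain[OF fin_I(2)[OF fA fG fC] _ ne[unfolded F_def] bd[unfolded F_def]] fA fG
    unfolding F_def by auto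
  show ?thesis
  proof (intro exI conjI allI impI)
    show "LP_optimal A G C a r d lam (Xo xs)" using xs memF by simp
    fix Y assume "LP_optimal A G C a r d lam Y"
    hence "(\<lambda>(i,j). Y i j) \<in> F" using memF by simp
    hence "(\<Sum>v\<in>A\<times>G. c v * (\<lambda>(i,j). Y i j) v) \<le> (\<Sum>v\<in>A\<times>G. c v * xs v)" using xs(2) by blast
    thus "delay G d T Y \<le> delay G d T (Xo xs)" unfolding cval by simp
  qed
qed

lemma separation:
  assumes nex: "\<not> (\<exists>X. LP_optimal A G C a r d lam X \<and> (\<forall>i\<in>A. dl G d X i = D i))"
  shows "\<exists>w. \<forall>X. LP_optimal A G C a r d lam X \<longrightarrow> (\<Sum>i\<in>A. w i * D i) < (\<Sum>i\<in>A. w i * dl G d X i)"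
proof -
  have inf: "\<forall>x. \<exists>\<rho>\<in>I3 A G C. bc r th D \<rho> < (\<Sum>v\<in>A\<times>G. Mc a d lam \<rho> v * x v)"
  proof
    fix x
    show "\<exists>\<rho>\<in>I3 A G C. bc r th D \<rho> < (\<Sum>v\<in>A\<times>G. Mc a d lam \<rho> v * x v)"
    proof (rule ccontr)
      assume "\<not> ?thesis"
      hence h: "\<forall>\<rho>\<in>I3 A G C. ev A G a d lam \<rho> x \<le> bc r th D \<rho>" by (auto simp: ev_def[OF fA fG fC] not_less)
      hence "\<forall>\<rho>\<in>I1 A G C. ev A G a d lam \<rho> x \<le> bc r th D \<rho>" by (auto simp: I3_def[OF fA fG fC])
      hence "LP_optimal A G C a r d lam (Xo x)" using feas_iff by blast
      moreover have "\<forall>i\<in>A. dl G d (Xo x) i = D i"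
      proof
        fix i assume i: "i \<in> A"
        have mem: "Dl i \<in> I3 A G C" "Dm i \<in> I3 A G C" using i by (auto simp: I3_def[OF fA fG fC])
        have "ev A G a d lam (Dl i) x \<le> D i" "ev A G a d lam (Dm i) x \<le> - D i"
          using bspec[OF h mem(1)] bspec[OF h mem(2)] by auto
        thus "dl G d (Xo x) i = D i" using ev_Dl[OF fA fG fC i] ev_Dm[OF fA fG fC i] by simp
      qed
      ultimately show False using nex by blast
    qed
  qed
  have fAG: "finite (A\<times>G)" using fA fG by simp
  obtain y where y: "\<forall>\<rho>\<in>I3 A G C. 0 \<le> y \<rho>" "\<forall>v\<in>A\<times>G. (\<Sum>\<rho>\<in>I3 A G C. y \<rho> * Mc a d lam \<rho> v) = 0"
    "(\<Sum>\<rho>\<in>I3 A G C. y \<rho> * bc r th D \<rho>) < 0"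
    using farkas[OF fin_I(3)[OF fA fG fC] fAG inf] by blast
  define w where "w i = y (Dl i) - y (Dm i)" for i
  show ?thesis
  proof (intro exI allI impI)
    fix X assume o: "LP_optimal A G C a r d lam X"
    define x where "x = (\<lambda>(i,j). X i j)"
    have Xx: "Xo x = X" by (simp add: x_def)
    have "0 = (\<Sum>v\<in>A\<times>G. (\<Sum>\<rho>\<in>I3 A G C. y \<rho> * Mc a d lam \<rho> v) * x v)"
      using y(2) by (intro sum.neutral[symmetric]) auto
    also have "\<dots> = (\<Sum>\<rho>\<in>I3 A G C. y \<rho> * ev A G a d lam \<rho> x)"
      by (simp add: sum_swap_lin ev_def[OF fA fG fC])
    also have "\<dots> = (\<Sum>\<rho>\<in>I1 A G C. y \<rho> * ev A G a d lam \<rho> x) + (\<Sum>i\<in>A. w i * dl G d X i)"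
      using ev_Dl[OF fA fG fC] ev_Dm[OF fA fG fC]
      by (simp add: sum_I3[OF fA fG fC] w_def Xx algebra_simps sum_subtractf sum_negf)
    finally have e1: "(\<Sum>i\<in>A. w i * dl G d X i) = - (\<Sum>\<rho>\<in>I1 A G C. y \<rho> * ev A G a d lam \<rho> x)" by simp
    have "\<forall>\<rho>\<in>I1 A G C. ev A G a d lam \<rho> x \<le> bc r th D \<rho>" using feas_iff[of x D] o Xx by simp
    hence e2: "(\<Sum>\<rho>\<in>I1 A G C. y \<rho> * ev A G a d lam \<rho> x) \<le> (\<Sum>\<rho>\<in>I1 A G C. y \<rho> * bc r th D \<rho>)"
      using y(1) by (intro sum_mono mult_left_mono) (auto simp: I3_def[OF fA fG fC])
    have e3: "(\<Sum>\<rho>\<in>I3 A G C. y \<rho> * bc r th D \<rho>) = (\<Sum>\<rho>\<in>I1 A G C. y \<rho> * bc r th D \<rho>) + (\<Sum>i\<in>A. w i * D i)"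
      by (simp add: sum_I3[OF fA fG fC] w_def algebra_simps sum_subtractf sum_negf)
    show "(\<Sum>i\<in>A. w i * D i) < (\<Sum>i\<in>A. w i * dl G d X i)" using e1 e2 e3 y(3) by linarith
  qed
qed


lemma adm_mono: "admissible_for A G C a r S Y \<Longrightarrow> U \<subseteq> S \<Longrightarrow> admissible_for A G C a r U Y"
  by (auto simp: admissible_for_def)

lemma greedy: "distinct \<sigma> \<Longrightarrow> set \<sigma> \<subseteq> A \<Longrightarrow> \<exists>X. jointly_optimal A G C a r d (set \<sigma>) X \<and>
  (\<forall>k Y. admissible_for A G C a r (set (take k \<sigma>)) Y \<longrightarrow> delay G d (set (take k \<sigma>)) X \<le> delay G d (set (take k \<sigma>)) Y)"
proof (induction \<sigma> rule: rev_induct)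
  case Nil
  have "admissible_for A G C a r {} (\<lambda>_ _. 0)"
    by (simp add: admissible_for_def nonneg_alloc_def supply_respecting_def)
  hence "jointly_optimal A G C a r d {} (\<lambda>_ _. 0)" by (simp add: jointly_optimal_def delay_def)
  thus ?case by (intro exI[of _ "\<lambda>_ _. 0"]) (simp add: delay_def)
next
  case (snoc b \<tau>)
  have dt: "distinct \<tau>" "b \<notin> set \<tau>" using snoc.prems by auto
  have sub: "set \<tau> \<subseteq> A" "b \<in> A" using snoc.prems by auto
  obtain X where X: "jointly_optimal A G C a r d (set \<tau>) X"
    "\<forall>k Y. admissible_for A G C a r (set (take k \<tau>)) Y \<longrightarrow> delay G d (set (take k \<tau>)) X \<le> delay G d (set (take k \<tau>)) Y"
    using snoc.IH[OF dt(1) sub(1)] by blast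
  have psub: "set \<tau> \<subset> A" using sub dt by auto
  obtain X' where X': "jointly_optimal A G C a r d (insert b (set \<tau>)) X'"
    "\<forall>i'\<in>set \<tau>. delay G d {i'} X' = delay G d {i'} X"
    using ext psub X(1) sub dt unfolding extensible_def by blast
  show ?case
  proof (intro exI conjI allI impI)
    show "jointly_optimal A G C a r d (set (\<tau> @ [b])) X'" using X'(1) by simp
    fix k Y assume Y: "admissible_for A G C a r (set (take k (\<tau> @ [b]))) Y"
    show "delay G d (set (take k (\<tau> @ [b]))) X' \<le> delay G d (set (take k (\<tau> @ [b]))) Y"
    proof (cases "k \<le> length \<tau>")
      case True
      hence tk: "take k (\<tau> @ [b]) = take k \<tau>" by simp
      have "delay G d (set (take k \<tau>)) X' = delay G d (set (take k \<tau>)) X"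
        unfolding delay_dl using X'(2) set_take_subset[of k \<tau>]
        by (intro sum.cong) (auto simp: delay_single)
      also have "\<dots> \<le> delay G d (set (take k \<tau>)) Y" using X(2) Y tk by auto
      finally show ?thesis using tk by simp
    next
      case False
      hence tk: "take k (\<tau> @ [b]) = \<tau> @ [b]" by simp
      have "admissible_for A G C a r (insert b (set \<tau>)) Y" using Y unfolding tk by simp
      hence "delay G d (insert b (set \<tau>)) X' \<le> delay G d (insert b (set \<tau>)) Y"
        using X'(1) unfolding jointly_optimal_def by blast
      thus ?thesis unfolding tk by simp
    qed
  qed
qed


lemma greedy_point:
  fixes w :: "'a \<Rightarrow> real"
  shows "\<exists>g. LP_optimal A G C a r d lam g \<and>
    (\<Sum>i\<in>A. w i * dl G d g i) \<le> (\<Sum>i\<in>A. w i * ((cc i - m i) / lam i))"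
proof -
  define D where "D i = (cc i - m i) / lam i" for i
  define key where "key j = (- lam j, - w j)" for j
  obtain xs where xs: "set xs = A" "distinct xs" using finite_distinct_list[OF fA] by blast
  define \<sigma> where "\<sigma> = sort_key key xs"
  have \<sigma>: "set \<sigma> = A" "distinct \<sigma>" "sorted (map key \<sigma>)" using xs by (auto simp: \<sigma>_def)
  obtain g where g: "jointly_optimal A G C a r d A g"
    "\<forall>k Y. admissible_for A G C a r (set (take k \<sigma>)) Y \<longrightarrow> delay G d (set (take k \<sigma>)) g \<le> delay G d (set (take k \<sigma>)) Y"
    using greedy[OF \<sigma>(2)] \<sigma>(1) by auto
  have dc: "delay G d U g \<le> delay G d U Y"
    if U: "U \<subseteq> A" "\<forall>j\<in>A. \<forall>i\<in>U. key j \<le> key i \<longrightarrow> j \<in> U" and Y: "admissible_for A G C a r A Y" for U Y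
  proof -
    obtain k where k: "set (take k \<sigma>) = U" using sorted_prefix_set[OF \<sigma>(3), of U] U \<sigma>(1) by auto
    have "admissible_for A G C a r (set (take k \<sigma>)) Y" using adm_mono[OF Y U(1)] k by simp
    hence "delay G d (set (take k \<sigma>)) g \<le> delay G d (set (take k \<sigma>)) Y" using g(2) by blast
    thus ?thesis unfolding k .
  qed
  have keyle: "lam i \<le> lam j" if "key j \<le> key i" for i j using that by (auto simp: key_def)
  have gadm: "admissible_for A G C a r A g" using g(1) by (simp add: jointly_optimal_def)
  have gopt: "LP_optimal A G C a r d lam g"
  proof -
    have "LP_obj A G d lam g \<le> LP_obj A G d lam Y" if Y: "admissible_for A G C a r A Y" for Y
    proof -
      have "0 \<le> (\<Sum>i\<in>A. lam i * (dl G d Y i - dl G d g i))"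
      proof (rule abel_nonneg[OF fA])
        show "\<forall>i\<in>A. 0 \<le> lam i" using lam0 by auto
        show "\<forall>i\<in>A. 0 \<le> (\<Sum>j\<in>{j\<in>A. lam i \<le> lam j}. dl G d Y j - dl G d g j)"
        proof
          fix i assume i: "i \<in> A"
          have "delay G d {j\<in>A. lam i \<le> lam j} g \<le> delay G d {j\<in>A. lam i \<le> lam j} Y"
            using Y by (intro dc) (auto dest: keyle)
          thus "0 \<le> (\<Sum>j\<in>{j\<in>A. lam i \<le> lam j}. dl G d Y j - dl G d g j)"
            by (simp add: delay_dl sum_subtractf)
        qed
      qed
      thus ?thesis by (simp add: LP_obj_dl sum_subtractf algebra_simps)
    qed
    thus ?thesis using gadm by (simp add: LP_optimal_def)
  qed
  have pre: "delay G d {j\<in>A. \<mu> < lam j} X \<le> delay G d {j\<in>A. \<mu> < lam j} g"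
    if X: "LP_optimal A G C a r d lam X" and mu: "0 < \<mu>" for X \<mu>
  proof -
    define Pre where "Pre = {j\<in>A. \<mu> < lam j}"
    define u where "u j = dl G d X j - dl G d g j" for j
    have Xadm: "admissible_for A G C a r A X" using X by (simp add: LP_optimal_def)
    have PreA: "Pre \<subseteq> A" by (auto simp: Pre_def)
    have fPre: "finite Pre" using fA PreA finite_subset by blast
    have dcPre: "0 \<le> (\<Sum>j\<in>Pre. u j)"
    proof -
      have "delay G d Pre g \<le> delay G d Pre X"
        using Xadm by (intro dc) (auto simp: Pre_def dest!: keyle)
      thus ?thesis by (simp add: u_def delay_dl sum_subtractf)
    qed
    have tot: "(\<Sum>j\<in>A. lam j * u j) = 0"
      using opt_val[OF X] opt_val[OF gopt] by (simp add: u_def LP_obj_dl algebra_simps sum_subtractf)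
    show ?thesis
    proof (cases "Pre = {}")
      case True thus ?thesis by (simp add: Pre_def[symmetric] delay_def)
    next
      case False
      define \<epsilon> where "\<epsilon> = Min (lam ` Pre) - \<mu>"
      have "Min (lam ` Pre) \<in> lam ` Pre" using False fPre by (intro Min_in) auto
      hence \<epsilon>0: "0 < \<epsilon>" by (auto simp: \<epsilon>_def Pre_def)
      have minle: "\<mu> + \<epsilon> \<le> lam j" if "j \<in> Pre" for j using that fPre by (simp add: \<epsilon>_def)
      define lam' where "lam' j = lam j - (if j \<in> Pre then \<epsilon> else 0)" for j
      have mono: "lam' j' \<le> lam' j" if "j \<in> A" "j' \<in> A" "lam j' \<le> lam j" for j j'
      proof (cases "j \<in> Pre"; cases "j' \<in> Pre")
        assume "j \<in> Pre" "j' \<notin> Pre"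
        thus ?thesis using minle[of j] that by (auto simp: lam'_def Pre_def)
      next
        assume "j \<notin> Pre" "j' \<in> Pre"
        thus ?thesis using that by (auto simp: lam'_def Pre_def)
      qed (use that in \<open>auto simp: lam'_def\<close>)
      have "0 \<le> (\<Sum>j\<in>A. lam' j * u j)"
      proof (rule abel_nonneg[OF fA])
        show "\<forall>i\<in>A. 0 \<le> lam' i"
        proof
          fix i assume i: "i \<in> A"
          show "0 \<le> lam' i"
          proof (cases "i \<in> Pre")
            case True thus ?thesis using minle[OF True] mu by (simp add: lam'_def)
          next
            case False thus ?thesis using lam0 i by (simp add: lam'_def less_imp_le)
          qed
        qed
        show "\<forall>i\<in>A. 0 \<le> (\<Sum>j\<in>{j\<in>A. lam' i \<le> lam' j}. u j)"
        proof
          fix i assume i: "i \<in> A"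
          have "delay G d {j\<in>A. lam' i \<le> lam' j} g \<le> delay G d {j\<in>A. lam' i \<le> lam' j} X"
          proof (rule dc[OF _ _ Xadm])
            show "{j\<in>A. lam' i \<le> lam' j} \<subseteq> A" by auto
            show "\<forall>j\<in>A. \<forall>i'\<in>{j\<in>A. lam' i \<le> lam' j}. key j \<le> key i' \<longrightarrow> j \<in> {j\<in>A. lam' i \<le> lam' j}"
            proof (intro ballI impI)
              fix j i' assume j: "j \<in> A" and i': "i' \<in> {j\<in>A. lam' i \<le> lam' j}" and kk: "key j \<le> key i'"
              have "lam' i' \<le> lam' j" using mono[OF j _ keyle[OF kk]] i' by auto
              thus "j \<in> {j\<in>A. lam' i \<le> lam' j}" using i' j by auto
            qed
          qed
          thus "0 \<le> (\<Sum>j\<in>{j\<in>A. lam' i \<le> lam' j}. u j)"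
            by (simp add: u_def delay_dl sum_subtractf)
        qed
      qed
      moreover have "(\<Sum>j\<in>A. lam j * u j) = (\<Sum>j\<in>A. lam' j * u j) + \<epsilon> * (\<Sum>j\<in>Pre. u j)"
      proof -
        have "(\<Sum>j\<in>A. lam j * u j) = (\<Sum>j\<in>A. lam' j * u j) + (\<Sum>j\<in>A. if j \<in> Pre then \<epsilon> * u j else 0)"
          unfolding sum.distrib[symmetric] by (rule sum.cong) (auto simp: lam'_def algebra_simps)
        also have "(\<Sum>j\<in>A. if j \<in> Pre then \<epsilon> * u j else 0) = \<epsilon> * (\<Sum>j\<in>Pre. u j)"
          by (simp add: sum_if_sub[OF fA PreA] sum_distrib_left)
        finally show ?thesis .
      qed
      ultimately have "\<epsilon> * (\<Sum>j\<in>Pre. u j) \<le> 0" using tot by linarith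
      hence "(\<Sum>j\<in>Pre. u j) \<le> 0" using \<epsilon>0 by (simp add: mult_le_0_iff)
      thus ?thesis by (simp add: Pre_def[symmetric] u_def delay_dl sum_subtractf)
    qed
  qed
  have cls: "0 \<le> (\<Sum>j\<in>lam_class A lam i0. w j * (D j - dl G d g j))" if i0: "i0 \<in> A" for i0
  proof -
    define \<mu> where "\<mu> = lam i0"
    define S where "S = lam_class A lam i0"
    have S_eq: "S = {j\<in>A. lam j = \<mu>}" by (simp add: S_def lam_class_def \<mu>_def)
    have SA: "S \<subseteq> A" by (auto simp: S_eq)
    have fS: "finite S" using fA SA finite_subset by blast
    have mu0: "0 < \<mu>" using lam0 i0 by (simp add: \<mu>_def)
    have BB: "cond_BB A G C a r d m lam p S" and SC: "cond_SC A G C a r d m lam p S"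
      using prp i0 by (auto simp: proper_def S_def)
    have payS: "pay G U X p = (\<Sum>j\<in>U. cc j) - \<mu> * delay G d U X"
      if X: "LP_optimal A G C a r d lam X" and U: "U \<subseteq> S" for X U
    proof -
      have "pay G U X p = (\<Sum>j\<in>U. cc j - \<mu> * dl G d X j)"
        unfolding pay_sum[of G U] using U SA S_eq by (intro sum.cong) (auto simp: CS[OF X])
      thus ?thesis by (simp add: sum_subtractf delay_dl sum_distrib_left)
    qed
    have DS: "(\<Sum>j\<in>U. D j) = ((\<Sum>j\<in>U. cc j) - budget m U) / \<mu>" if U: "U \<subseteq> S" for U
    proof -
      have "(\<Sum>j\<in>U. D j) = (\<Sum>j\<in>U. (cc j - m j) / \<mu>)"
        using U by (intro sum.cong) (auto simp: D_def S_eq)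
      thus ?thesis by (simp add: sum_divide_distrib[symmetric] sum_subtractf budget_def)
    qed
    have fullS: "delay G d S X = (\<Sum>j\<in>S. D j)" if X: "LP_optimal A G C a r d lam X" for X
    proof -
      have "pay G S X p = budget m S" using BB X by (simp add: cond_BB_def)
      hence "(\<Sum>j\<in>S. cc j) - \<mu> * delay G d S X = budget m S" using payS[OF X] by simp
      hence "delay G d S X = ((\<Sum>j\<in>S. cc j) - budget m S) / \<mu>" using mu0 by (simp add: field_simps)
      thus ?thesis using DS by simp
    qed
    have dsplit: "delay G d S X = delay G d P X + delay G d (S - P) X" if "P \<subseteq> S" for X P
      unfolding delay_dl using fS that by (metis sum.subset_diff add.commute)
    have Dsplit: "(\<Sum>j\<in>S. D j) = (\<Sum>j\<in>P. D j) + (\<Sum>j\<in>S - P. D j)" if "P \<subseteq> S" for P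
      using fS that by (metis sum.subset_diff add.commute)
    have Pfact: "0 \<le> (\<Sum>j\<in>{j\<in>S. w i \<le> w j}. D j - dl G d g j)" if i: "i \<in> S" for i
    proof -
      define P where "P = {j\<in>S. w i \<le> w j}"
      define T where "T = S - P"
      have PS: "P \<subseteq> S" and TS: "T \<subseteq> S" by (auto simp: P_def T_def)
      obtain xs where xs: "LP_optimal A G C a r d lam xs"
        "\<forall>Y. LP_optimal A G C a r d lam Y \<longrightarrow> delay G d T Y \<le> delay G d T xs"
        using attain[of T] TS SA by auto
      have "pay G T xs p \<le> budget m T" using SC TS xs unfolding cond_SC_def by blast
      hence "(\<Sum>j\<in>T. cc j) - budget m T \<le> \<mu> * delay G d T xs" using payS[OF xs(1) TS] by simp
      moreover have "\<mu> * (\<Sum>j\<in>T. D j) = (\<Sum>j\<in>T. cc j) - budget m T" using DS[OF TS] mu0 by simp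
      ultimately have "\<mu> * (\<Sum>j\<in>T. D j) \<le> \<mu> * delay G d T xs" by linarith
      hence DT: "(\<Sum>j\<in>T. D j) \<le> delay G d T xs" using mu0 by (simp add: mult_le_cancel_left_pos)
      have PD: "delay G d P xs \<le> (\<Sum>j\<in>P. D j)"
        using dsplit[OF PS, of xs] Dsplit[OF PS] fullS[OF xs(1)] DT by (simp add: T_def)
      define Pre where "Pre = {j\<in>A. \<mu> < lam j}"
      have disj: "Pre \<inter> P = {}" using PS by (auto simp: Pre_def S_eq)
      have fPre: "finite Pre" using fA by (simp add: Pre_def)
      have fP: "finite P" using fS PS finite_subset by blast
      have dU: "delay G d (Pre \<union> P) X = delay G d Pre X + delay G d P X" for X
        unfolding delay_dl using fPre fP disj by (simp add: sum.union_disjoint)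
      have "delay G d (Pre \<union> P) g \<le> delay G d (Pre \<union> P) xs"
      proof (rule dc)
        show "Pre \<union> P \<subseteq> A" using PS SA by (auto simp: Pre_def)
        show "admissible_for A G C a r A xs" using xs(1) by (simp add: LP_optimal_def)
        show "\<forall>j\<in>A. \<forall>i'\<in>Pre \<union> P. key j \<le> key i' \<longrightarrow> j \<in> Pre \<union> P"
        proof (intro ballI impI)
          fix j i' assume j: "j \<in> A" and i': "i' \<in> Pre \<union> P" and kk: "key j \<le> key i'"
          have kk': "lam j > lam i' \<or> (lam j \<ge> lam i' \<and> w j \<ge> w i')" using kk by (auto simp: key_def)
          show "j \<in> Pre \<union> P"
          proof (cases "i' \<in> Pre")
            case True thus ?thesis using kk' j by (auto simp: Pre_def)
          next
            case False
            hence i'P: "i' \<in> P" using i' by auto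
            hence "lam i' = \<mu>" "w i \<le> w i'" by (auto simp: P_def S_eq)
            thus ?thesis using kk' j by (cases "lam j = \<mu>") (auto simp: Pre_def P_def S_eq)
          qed
        qed
      qed
      moreover have "delay G d Pre xs \<le> delay G d Pre g" using pre[OF xs(1) mu0] by (simp add: Pre_def)
      ultimately have "delay G d P g \<le> delay G d P xs" using dU[of g] dU[of xs] by linarith
      hence "delay G d P g \<le> (\<Sum>j\<in>P. D j)" using PD by linarith
      thus ?thesis by (simp add: P_def[symmetric] delay_dl sum_subtractf)
    qed
    have "(\<Sum>j\<in>S. D j - dl G d g j) = 0" using fullS[OF gopt] by (simp add: sum_subtractf delay_dl)
    from abel_zero[OF fS this, of w] Pfact show ?thesis by (simp add: S_def)
  qed
  have "(\<Sum>i\<in>A. w i * (D i - dl G d g i)) =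
      (\<Sum>v\<in>lam ` A. \<Sum>i\<in>{i\<in>A. lam i = v}. w i * (D i - dl G d g i))"
    by (rule sum.image_gen[OF fA])
  also have "\<dots> \<ge> 0"
  proof (rule sum_nonneg)
    fix v assume "v \<in> lam ` A"
    then obtain i0 where i0: "i0 \<in> A" "v = lam i0" by auto
    thus "0 \<le> (\<Sum>i\<in>{i\<in>A. lam i = v}. w i * (D i - dl G d g i))"
      using cls[OF i0(1)] by (simp add: lam_class_def)
  qed
  finally have "(\<Sum>i\<in>A. w i * dl G d g i) \<le> (\<Sum>i\<in>A. w i * D i)"
    by (simp add: algebra_simps sum_subtractf)
  thus ?thesis using gopt by (auto simp: D_def)
qed


lemma main: "\<exists>X. LP_optimal A G C a r d lam X \<and> (\<forall>i\<in>A. pay G {i} X p = m i)"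
proof (rule ccontr)
  assume nex: "\<not> ?thesis"
  define D where "D i = (cc i - m i) / lam i" for i
  have "\<not> (\<exists>X. LP_optimal A G C a r d lam X \<and> (\<forall>i\<in>A. dl G d X i = D i))"
  proof
    assume "\<exists>X. LP_optimal A G C a r d lam X \<and> (\<forall>i\<in>A. dl G d X i = D i)"
    then obtain X where X: "LP_optimal A G C a r d lam X" "\<forall>i\<in>A. dl G d X i = D i" by blast
    have "\<forall>i\<in>A. pay G {i} X p = m i"
    proof
      fix i assume i: "i \<in> A"
      have "lam i \<noteq> 0" using lam0 i by auto
      thus "pay G {i} X p = m i" using CS[OF X(1) i] X(2) i by (simp add: D_def)
    qed
    thus False using nex X(1) by blast
  qed
  then obtain w where w: "\<forall>X. LP_optimal A G C a r d lam X \<longrightarrow> (\<Sum>i\<in>A. w i * D i) < (\<Sum>i\<in>A. w i * dl G d X i)"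
    using separation by blast
  obtain g where g: "LP_optimal A G C a r d lam g" "(\<Sum>i\<in>A. w i * dl G d g i) \<le> (\<Sum>i\<in>A. w i * D i)"
    using greedy_point[of w] by (auto simp: D_def)
  show False using w g by force
qed

end

theorem lemma4p3:
  fixes A :: "'a set" and G :: "'g set" and C :: "'c set"
    and a :: "'a \<Rightarrow> 'g \<Rightarrow> 'c \<Rightarrow> real" and r :: "'a \<Rightarrow> 'c \<Rightarrow> real"
    and d :: "'a \<Rightarrow> 'g \<Rightarrow> real" and m :: "'a \<Rightarrow> real"
    and lam :: "'a \<Rightarrow> real" and p :: "'g \<Rightarrow> real"
  assumes "finite A" and "finite G" and "finite C"
    and "\<forall>i\<in>A. \<forall>k\<in>C. r i k \<ge> 0"
    and "\<forall>i\<in>A. \<forall>j\<in>G. d i j \<ge> 0"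
    and "\<forall>i\<in>A. m i > 0"
    and "extensible A G C a r d"
    and "\<forall>i\<in>A. lam i > 0"
    and "\<forall>j\<in>G. p j \<ge> 0"
    and "proper A G C a r d m lam p"
  shows "\<exists>X. LP_optimal A G C a r d lam X \<and> (\<forall>i\<in>A. pay G {i} X p = m i)"
proof -
  obtain \<alpha> where "DLP_optimal A G C a r d lam \<alpha> p" using assms(10) by (auto simp: proper_def)
  thus ?thesis using main[OF assms] by blast
qed


end
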